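(* Let $\mathcal{X}$ be a measurable space, $k:\mathcal{X}\times\mathcal{X}\to\mathbb{R}$ a measurable reproducing kernel with $|k(x,y)|\le1$ for all $x,y$, and $\{\mathbb{P}_\theta:\theta\in\Theta\}$ a family of Borel probability measures on $\mathcal{X}$. Let $\mathbb{P}^*_0$ be a Borel probability measure with $\inf_{\theta\in\Theta}\mathrm{MMD}(\mathbb{P}_\theta,\mathbb{P}^*_0)=0$. Fix $\alpha>0$, an integer $T\ge1$ and a Borel probability measure $\mathbb{F}$. For each $n$, let $x_1,\dots,x_n$ be i.i.d. $\mathbb{P}^*_0$ and let $\nu_n$ be the approximate posterior defined in the context. Then for any sequence of positive reals $M_n\to+\infty$ with $M_n n^{-1/2}\to0$, \[ \nu_n\Big(\mathbb{P}:\ \mathrm{MMD}(\mathbb{P}^*_0,\mathbb{P}_{\theta^*(\mathbb{P})})>\frac{M_n}{n^{1/2}}\Big)\longrightarrow0\quad(n\to\infty), \] where the convergence is in $L^1$, i.e. the expectation of the left-hand side with respect to $x_{1:n}\overset{\text{iid}}{\sim}\mathbb{P}^*_0$ tends to $0$.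
   Context: For a Borel probability measure $\mathbb{P}$ on $\mathcal{X}$, $\mu_{\mathbb{P}}=\int k(x,\cdot)\,\mathbb{P}(dx)$ in the RKHS $\mathcal{H}_k$ of $k$, and $\mathrm{MMD}(\mathbb{P},\mathbb{Q})=\|\mu_{\mathbb{P}}-\mu_{\mathbb{Q}}\|_{\mathcal{H}_k}$. $\theta^*(\mathbb{P})$ denotes a minimiser in $\arg\inf_{\theta\in\Theta}\mathrm{MMD}^2(\mathbb{P},\mathbb{P}_\theta)$ (assumed to exist and chosen measurably). Given data $x_{1:n}$, $\nu_n$ is the law of the random measure $\mathbb{P}=\sum_{i=1}^n w_i\delta_{x_i}+\sum_{k=1}^T\tilde w_k\delta_{\tilde x_k}$ with $\tilde x_{1:T}$ i.i.d. $\mathbb{F}$, independent of $(w_1,\dots,w_n,\tilde w_1,\dots,\tilde w_T)\sim\mathrm{Dirichlet}(1,\dots,1,\tfrac{\alpha}{T},\dots,\tfrac{\alpha}{T})$ ($n$ ones, $T$ copies of $\alpha/T$). The quantity $\nu_n(\cdot)$ depends on the random data. *)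

theory Defs
  imports "HOL-Probability.Probability"
begin

definition pd_kernel :: "'a measure \<Rightarrow> ('a \<Rightarrow> 'a \<Rightarrow> real) \<Rightarrow> bool" where
  "pd_kernel M k \<longleftrightarrow>
     (\<forall>x\<in>space M. \<forall>y\<in>space M. k x y = k y x) \<and>
     (\<forall>(m::nat) (xs::nat \<Rightarrow> 'a) (c::nat \<Rightarrow> real). (\<forall>i<m. xs i \<in> space M) \<longrightarrow>
        (\<Sum>i<m. \<Sum>j<m. c i * c j * k (xs i) (xs j)) \<ge> 0)"

text \<open>MMD = RKHS norm of the difference of kernel mean embeddings, written out
  via the reproducing property:
  norm of mu_P - mu_Q squared = EE k(X,X') - 2 EE k(X,Y) + EE k(Y,Y').\<close>
definition mmd :: "('a \<Rightarrow> 'a \<Rightarrow> real) \<Rightarrow> 'a measure \<Rightarrow> 'a measure \<Rightarrow> real" where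
  "mmd k P Q = sqrt ((LINT x|P. LINT y|P. k x y) - 2 * (LINT x|P. LINT y|Q. k x y)
                     + (LINT x|Q. LINT y|Q. k x y))"

definition gamma_density :: "real \<Rightarrow> real \<Rightarrow> real" where
  "gamma_density a x = (if x > 0 then x powr (a - 1) * exp (- x) / Gamma a else 0)"

text \<open>Normalisation onto the simplex (the fallback branch only occurs on a null set).\<close>
definition simplex_normalize :: "nat \<Rightarrow> (nat \<Rightarrow> real) \<Rightarrow> nat \<Rightarrow> real" where
  "simplex_normalize m g =
     (if (\<forall>j<m. g j \<ge> 0) \<and> (\<Sum>i<m. g i) > 0
      then (\<lambda>j\<in>{..<m}. g j / (\<Sum>i<m. g i))
      else (\<lambda>j\<in>{..<m}. 1 / real m))"

definition dirichlet :: "nat \<Rightarrow> (nat \<Rightarrow> real) \<Rightarrow> (nat \<Rightarrow> real) measure" where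
  "dirichlet m a =
     distr (PiM {..<m} (\<lambda>j. density lborel (gamma_density (a j))))
           (PiM {..<m} (\<lambda>_. borel)) (simplex_normalize m)"

definition weighted_dirac :: "'a measure \<Rightarrow> nat \<Rightarrow> (nat \<Rightarrow> 'a) \<Rightarrow> (nat \<Rightarrow> real) \<Rightarrow> 'a measure" where
  "weighted_dirac M m y w =
     measure_of (space M) (sets M) (\<lambda>A. \<Sum>j<m. ennreal (w j) * indicator A (y j))"

text \<open>nu_n given data x_{1:n} (indices 0..n-1): law of
  sum_i w_i delta_{x_i} + sum_k w~_k delta_{x~_k}, with
  (w,w~) ~ Dirichlet(1,...,1,alpha/T,...,alpha/T) independent of x~_{1:T} iid F.\<close>
definition approx_posterior ::
  "'a measure \<Rightarrow> 'a measure \<Rightarrow> real \<Rightarrow> nat \<Rightarrow> nat \<Rightarrow> (nat \<Rightarrow> 'a) \<Rightarrow> 'a measure measure" where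
  "approx_posterior M F \<alpha> T n x =
     distr (dirichlet (n + T) (\<lambda>j. if j < n then 1 else \<alpha> / real T) \<Otimes>\<^sub>M PiM {..<T} (\<lambda>_. F))
           (prob_algebra M)
           (\<lambda>(w, xt). weighted_dirac M (n + T) (\<lambda>j. if j < n then x j else xt (j - n)) w)"

end

theory Submission
  imports Defs
begin

lemma PiM_one:
  fixes f :: "'a \<Rightarrow> real"
  assumes "product_prob_space M" "i \<in> I" "f \<in> borel_measurable (M i)"
  shows "(\<integral>\<omega>. f (\<omega> i) \<partial>PiM I M) = integral\<^sup>L (M i) f"
proof -
  interpret product_prob_space M by fact
  have "(\<integral>\<omega>. f (\<omega> i) \<partial>PiM I M) = integral\<^sup>L (distr (PiM I M) (M i) (\<lambda>\<omega>. \<omega> i)) f"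
    by (rule integral_distr[symmetric]) (auto intro: measurable_component_singleton assms)
  also have "\<dots> = integral\<^sup>L (M i) f" using PiM_component[OF assms(2)] by simp
  finally show ?thesis .
qed

lemma PiM_prod2:
  fixes \<phi> \<psi> :: "'a \<Rightarrow> real"
  assumes "product_prob_space M" "finite I" "i \<in> I" "j \<in> I" "i \<noteq> j"
    "integrable (M i) \<phi>" "integrable (M j) \<psi>"
  shows "(\<integral>\<omega>. \<phi> (\<omega> i) * \<psi> (\<omega> j) \<partial>PiM I M) = integral\<^sup>L (M i) \<phi> * integral\<^sup>L (M j) \<psi>"
proof -
  interpret product_prob_space M by fact
  define g where "g = (\<lambda>l. if l = i then \<phi> else if l = j then \<psi> else (\<lambda>_. 1::real))"
  have eq: "(\<Prod>l\<in>I. g l (\<omega> l)) = \<phi> (\<omega> i) * \<psi> (\<omega> j)" for \<omega>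
  proof -
    have "(\<Prod>l\<in>I. g l (\<omega> l)) = g i (\<omega> i) * (\<Prod>l\<in>I-{i}. g l (\<omega> l))"
      using assms by (simp add: prod.remove)
    also have "(\<Prod>l\<in>I-{i}. g l (\<omega> l)) = g j (\<omega> j) * (\<Prod>l\<in>I-{i}-{j}. g l (\<omega> l))"
      using assms by (subst prod.remove[of _ j]) auto
    also have "(\<Prod>l\<in>I-{i}-{j}. g l (\<omega> l)) = 1"
      by (rule prod.neutral) (auto simp: g_def)
    finally show ?thesis using assms by (simp add: g_def)
  qed
  have "(\<integral>\<omega>. (\<Prod>l\<in>I. g l (\<omega> l)) \<partial>PiM I M) = (\<Prod>l\<in>I. integral\<^sup>L (M l) (g l))"
    by (rule product_integral_prod) (use assms in \<open>auto simp: g_def\<close>)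
  also have "\<dots> = integral\<^sup>L (M i) (g i) * (\<Prod>l\<in>I-{i}. integral\<^sup>L (M l) (g l))"
    using assms by (simp add: prod.remove)
  also have "(\<Prod>l\<in>I-{i}. integral\<^sup>L (M l) (g l)) = integral\<^sup>L (M j) (g j) * (\<Prod>l\<in>I-{i}-{j}. integral\<^sup>L (M l) (g l))"
    using assms by (subst prod.remove[of _ j]) auto
  also have "(\<Prod>l\<in>I-{i}-{j}. integral\<^sup>L (M l) (g l)) = 1"
    by (rule prod.neutral) (auto simp: g_def M.prob_space)
  finally show ?thesis using assms eq by (simp add: g_def)
qed

lemma PiM_two:
  fixes f :: "'a \<Rightarrow> 'a \<Rightarrow> real"
  assumes "product_prob_space M" "finite I" "i \<in> I" "j \<in> I" "i \<noteq> j"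
    and f: "(\<lambda>(x,y). f x y) \<in> borel_measurable (M i \<Otimes>\<^sub>M M j)"
    and bnd: "\<And>x y. x \<in> space (M i) \<Longrightarrow> y \<in> space (M j) \<Longrightarrow> \<bar>f x y\<bar> \<le> B"
  shows "(\<integral>\<omega>. f (\<omega> i) (\<omega> j) \<partial>PiM I M) = (\<integral>x. \<integral>y. f x y \<partial>M j \<partial>M i)"
proof -
  interpret product_prob_space M by fact
  let ?J = "I - {i}"
  have IJ: "I = {i} \<union> ?J" using assms by auto
  have meas: "(\<lambda>\<omega>. f (\<omega> i) (\<omega> j)) \<in> borel_measurable (PiM I M)"
  proof -
    have "(\<lambda>\<omega>. (\<omega> i, \<omega> j)) \<in> measurable (PiM I M) (M i \<Otimes>\<^sub>M M j)"
      using assms by (auto intro!: measurable_Pair measurable_component_singleton)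
    from measurable_compose[OF this f] show ?thesis by simp
  qed
  have int: "integrable (PiM I M) (\<lambda>\<omega>. f (\<omega> i) (\<omega> j))"
  proof (rule integrable_const_bound[where B=B])
    show "AE x in PiM I M. norm (f (x i) (x j)) \<le> B"
      using assms by (auto intro!: bnd simp: space_PiM PiE_iff)
  qed (fact meas)
  have "(\<integral>\<omega>. f (\<omega> i) (\<omega> j) \<partial>PiM I M) = (\<integral>\<omega>. f (\<omega> i) (\<omega> j) \<partial>PiM ({i} \<union> ?J) M)"
    using IJ by simp
  also have "\<dots> = (\<integral>x. (\<integral>y. f (merge {i} ?J (x, y) i) (merge {i} ?J (x, y) j) \<partial>PiM ?J M) \<partial>PiM {i} M)"
    by (rule product_integral_fold) (use assms int IJ in auto)
  also have "\<dots> = (\<integral>x. (\<integral>y. f (x i) (y j) \<partial>PiM ?J M) \<partial>PiM {i} M)"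
    using assms by (simp add: merge_def)
  also have "\<dots> = (\<integral>x. (\<integral>y. f (x i) y \<partial>M j) \<partial>PiM {i} M)"
  proof -
    have inner: "(\<integral>y. f (x i) (y j) \<partial>PiM ?J M) = (\<integral>y. f (x i) y \<partial>M j)"
      if x: "x \<in> space (PiM {i} M)" for x
    proof -
      from x have "x i \<in> space (M i)" by (auto simp: space_PiM)
      then have "(\<lambda>y. f (x i) y) \<in> borel_measurable (M j)"
        using f by (auto intro: measurable_Pair2)
      then show ?thesis using assms by (intro PiM_one) auto
    qed
    show ?thesis by (rule Bochner_Integration.integral_cong) (auto simp: inner)
  qed
  also have "\<dots> = (\<integral>x. \<integral>y. f x y \<partial>M j \<partial>M i)"
  proof (rule product_integral_singleton)
    show "(\<lambda>x. \<integral>y. f x y \<partial>M j) \<in> borel_measurable (M i)"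
      using f by (rule M.borel_measurable_lebesgue_integral)
  qed
  finally show ?thesis .
qed

definition Kint :: "('a \<Rightarrow> 'a \<Rightarrow> real) \<Rightarrow> 'a measure \<Rightarrow> 'a measure \<Rightarrow> real" where
  "Kint k P Q = (LINT x|P. LINT y|Q. k x y)"

lemma mmd_Kint: "mmd k P Q = sqrt (Kint k P P - 2 * Kint k P Q + Kint k Q Q)"
  by (simp add: mmd_def Kint_def)

lemma sum_div_reindex:
  fixes F :: "nat \<Rightarrow> real"
  shows "(\<Sum>i<L*N. F (i div N)) = real N * (\<Sum>l<L. F l)"
proof (induction L)
  case 0 then show ?case by simp
next
  case (Suc L)
  have split: "{..<Suc L * N} = {..<L*N} \<union> {L*N..<L*N+N}" by auto
  have "(\<Sum>i\<in>{L*N..<L*N+N}. F (i div N)) = (\<Sum>i\<in>{L*N..<L*N+N}. F L)"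
  proof (rule sum.cong[OF refl])
    fix i assume "i \<in> {L*N..<L*N+N}"
    then have "i div N = L"
      by (intro div_nat_eqI) (auto simp: mult.commute)
    then show "F (i div N) = F L" by simp
  qed
  then have "(\<Sum>i\<in>{L*N..<L*N+N}. F (i div N)) = real N * F L" by simp
  moreover have "(\<Sum>i<Suc L*N. F (i div N)) = (\<Sum>i<L*N. F (i div N)) + (\<Sum>i\<in>{L*N..<L*N+N}. F (i div N))"
    unfolding split by (rule sum.union_disjoint) auto
  ultimately show ?case using Suc by (simp add: distrib_left)
qed

lemma quad_cs:
  fixes X Y W :: real
  assumes "\<And>t. X + 2*t*W + t^2*Y \<ge> 0" "X \<ge> 0" "Y \<ge> 0"
  shows "W^2 \<le> X*Y"
proof (cases "Y = 0")
  case True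
  have "W = 0"
  proof (rule ccontr)
    assume "W \<noteq> 0"
    have "X + 2*(-(X+1)/(2*W))*W + (-(X+1)/(2*W))^2*Y \<ge> 0" by (rule assms(1))
    moreover have "2*(-(X+1)/(2*W))*W = -(X+1)" using \<open>W \<noteq> 0\<close> by (simp add: field_simps)
    ultimately show False using True by simp
  qed
  then show ?thesis using assms by simp
next
  case False
  then have Y: "Y > 0" using assms by simp
  have "X + 2*(-W/Y)*W + (-W/Y)^2*Y \<ge> 0" by (rule assms(1))
  then have "X - W^2/Y \<ge> 0" using Y by (simp add: field_simps power2_eq_square)
  then show ?thesis using Y by (simp add: field_simps)
qed

lemma abs_int_bound:
  fixes f :: "'a \<Rightarrow> real"
  assumes "prob_space Q" "f \<in> borel_measurable Q" "\<And>x. x \<in> space Q \<Longrightarrow> \<bar>f x\<bar> \<le> B"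
  shows "\<bar>integral\<^sup>L Q f\<bar> \<le> B"
proof -
  interpret Q: prob_space Q by fact
  have int: "integrable Q f" using assms by (intro Q.integrable_const_bound[where B=B]) auto
  have "integral\<^sup>L Q f \<le> B" using assms by (intro Q.integral_le_const int) (auto simp: abs_le_iff)
  moreover have "- B \<le> integral\<^sup>L Q f"
  proof (rule Q.integral_ge_const[OF int])
    show "AE x in Q. - B \<le> f x" by (rule AE_I2) (use assms(3) in force)
  qed
  ultimately show ?thesis by auto
qed

lemma int_bounded:
  fixes f :: "'a \<Rightarrow> real"
  assumes "prob_space Q" "f \<in> borel_measurable Q" "\<And>x. x \<in> space Q \<Longrightarrow> \<bar>f x\<bar> \<le> B"
  shows "integrable Q f"
proof -
  interpret Q: prob_space Q by fact
  show ?thesis using assms by (intro Q.integrable_const_bound[where B=B]) auto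
qed

context
  fixes M :: "'a measure" and k :: "'a \<Rightarrow> 'a \<Rightarrow> real"
  assumes kernel: "pd_kernel M k"
    and k_meas: "(\<lambda>(x, y). k x y) \<in> borel_measurable (M \<Otimes>\<^sub>M M)"
    and k_bdd: "\<forall>x\<in>space M. \<forall>y\<in>space M. \<bar>k x y\<bar> \<le> 1"
begin

lemma k_meas': 
  assumes "sets P = sets M" "sets Q = sets M"
  shows "(\<lambda>(x, y). k x y) \<in> borel_measurable (P \<Otimes>\<^sub>M Q)"
  using k_meas by (simp add: measurable_def sets_pair_measure_cong[OF assms] space_pair_measure
     sets_eq_imp_space_eq[OF assms(1)] sets_eq_imp_space_eq[OF assms(2)])

lemma k_meas2:
  assumes "sets Q = sets M" "x \<in> space M"
  shows "(\<lambda>y. k x y) \<in> borel_measurable Q"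
proof -
  have "(\<lambda>y. k x y) \<in> borel_measurable M"
    using measurable_Pair2[OF k_meas assms(2)] by simp
  then show ?thesis by (simp add: measurable_cong_sets[OF assms(1) refl])
qed

lemma k_meas1:
  assumes "sets Q = sets M" "y \<in> space M"
  shows "(\<lambda>x. k x y) \<in> borel_measurable Q"
proof -
  have "(\<lambda>x. k x y) \<in> borel_measurable M"
    using measurable_Pair1[OF k_meas assms(2)] by simp
  then show ?thesis by (simp add: measurable_cong_sets[OF assms(1) refl])
qed

lemma k_diag_meas:
  assumes "sets Q = sets M"
  shows "(\<lambda>x. k x x) \<in> borel_measurable Q"
proof -
  have "(\<lambda>x. (x, x)) \<in> measurable M (M \<Otimes>\<^sub>M M)" by simp
  from measurable_compose[OF this k_meas] have "(\<lambda>x. k x x) \<in> borel_measurable M" by simp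
  then show ?thesis by (simp add: measurable_cong_sets[OF assms(1) refl])
qed

lemma inner_bdd:
  assumes "prob_space Q" "sets Q = sets M" "x \<in> space M"
  shows "\<bar>LINT y|Q. k x y\<bar> \<le> 1"
  using assms k_bdd sets_eq_imp_space_eq[OF assms(2)]
  by (intro abs_int_bound k_meas2) auto

lemma inner_meas:
  assumes "sets P = sets M" "sets Q = sets M" "prob_space Q"
  shows "(\<lambda>x. LINT y|Q. k x y) \<in> borel_measurable P"
proof -
  interpret Q: prob_space Q by fact
  show ?thesis using k_meas'[OF assms(1,2)] by (rule Q.borel_measurable_lebesgue_integral)
qed

lemma Kint_bdd:
  assumes "prob_space P" "sets P = sets M" "prob_space Q" "sets Q = sets M"
  shows "\<bar>Kint k P Q\<bar> \<le> 1"
  unfolding Kint_def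
  using assms sets_eq_imp_space_eq[OF assms(2)]
  by (intro abs_int_bound inner_meas inner_bdd) auto

lemma Kint_sym:
  assumes "prob_space P" "sets P = sets M" "prob_space Q" "sets Q = sets M"
  shows "Kint k P Q = Kint k Q P"
proof -
  interpret P: prob_space P by fact
  interpret Q: prob_space Q by fact
  interpret PQ: pair_sigma_finite P Q ..
  interpret PQp: prob_space "P \<Otimes>\<^sub>M Q" by (rule prob_space_pair) unfold_locales
  have spP: "space P = space M" and spQ: "space Q = space M"
    using sets_eq_imp_space_eq assms by blast+
  have int: "integrable (P \<Otimes>\<^sub>M Q) (\<lambda>(x, y). k x y)"
    using k_meas'[OF assms(2,4)] k_bdd
    by (intro int_bounded[where B=1]) (auto simp: space_pair_measure spP spQ PQp.prob_space_axioms)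
  have "Kint k Q P = (LINT y|Q. LINT x|P. k x y)"
    unfolding Kint_def
  proof (rule Bochner_Integration.integral_cong[OF refl])
    fix y assume y: "y \<in> space Q"
    show "(LINT x|P. k y x) = (LINT x|P. k x y)"
      by (rule Bochner_Integration.integral_cong[OF refl]) (use kernel y in \<open>auto simp: pd_kernel_def spP spQ\<close>)
  qed
  also have "\<dots> = Kint k P Q"
    unfolding Kint_def using PQ.Fubini_integral[of "\<lambda>x y. k x y"] int by simp
  finally show ?thesis ..
qed

lemma Kint_psd:
  fixes Pl :: "nat \<Rightarrow> 'a measure" and a :: "nat \<Rightarrow> real"
  assumes PP: "\<And>l. prob_space (Pl l)" "\<And>l. sets (Pl l) = sets M"
  shows "0 \<le> (\<Sum>l<L. \<Sum>l'<L. a l * a l' * Kint k (Pl l) (Pl l'))"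
proof -
  define \<Phi> where "\<Phi> = (\<Sum>l<L. \<Sum>l'<L. a l * a l' * Kint k (Pl l) (Pl l'))"
  define S where "S = (\<Sum>l<L. (a l)^2)"
  have spP: "\<And>l. space (Pl l) = space M" using sets_eq_imp_space_eq PP by blast
  have key: "- 2 * S / real N \<le> \<Phi>" if N: "N > 0" for N :: nat
  proof -
    define \<mu> where "\<mu> = (\<lambda>j. Pl (j div N))"
    define I where "I = {..<L*N}"
    define c where "c = (\<lambda>j. a (j div N) / real N)"
    have pps: "product_prob_space \<mu>"
      unfolding product_prob_space_def product_prob_space_axioms_def product_sigma_finite_def \<mu>_def
      using PP by (auto intro: prob_space_imp_sigma_finite)
    interpret product_prob_space \<mu> by fact
    interpret PI: prob_space "PiM I \<mu>" by (rule prob_space_PiM) (auto simp: \<mu>_def PP(1))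
    have spm: "\<And>j. space (\<mu> j) = space M" "\<And>j. sets (\<mu> j) = sets M" by (auto simp: \<mu>_def spP PP)
    have om: "\<omega> j \<in> space M" if "\<omega> \<in> space (PiM I \<mu>)" "j \<in> I" for \<omega> j
      using that spm by (auto simp: space_PiM PiE_iff)
    define Tm where "Tm = (\<lambda>i j. (\<integral>\<omega>. k (\<omega> i) (\<omega> j) \<partial>PiM I \<mu>))"
    have kmeasI: "(\<lambda>\<omega>. k (\<omega> i) (\<omega> j)) \<in> borel_measurable (PiM I \<mu>)" if "i \<in> I" "j \<in> I" for i j
    proof -
      have cs: "measurable (PiM I \<mu>) (\<mu> l) = measurable (PiM I \<mu>) M" for l
        by (rule measurable_cong_sets) (auto simp: spm)
      have "(\<lambda>\<omega>. \<omega> l) \<in> measurable (PiM I \<mu>) M" if "l \<in> I" for l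
        using measurable_component_singleton[OF that, of \<mu>] cs by simp
      then have "(\<lambda>\<omega>. (\<omega> i, \<omega> j)) \<in> measurable (PiM I \<mu>) (M \<Otimes>\<^sub>M M)"
        using that by (auto intro!: measurable_Pair)
      from measurable_compose[OF this k_meas] show ?thesis by simp
    qed
    have kintI: "integrable (PiM I \<mu>) (\<lambda>\<omega>. k (\<omega> i) (\<omega> j))" if "i \<in> I" "j \<in> I" for i j
      using that om k_bdd by (intro int_bounded[where B=1] kmeasI PI.prob_space_axioms) auto
    have Tm_le: "Tm i j \<le> Kint k (\<mu> i) (\<mu> j) + (if i = j then 2 else 0)" if "i \<in> I" "j \<in> I" for i j
    proof (cases "i = j")
      case True
      have "\<bar>Tm i j\<bar> \<le> 1" unfolding Tm_def
        using that om k_bdd by (intro abs_int_bound kmeasI PI.prob_space_axioms) auto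
      moreover have "\<bar>Kint k (\<mu> i) (\<mu> j)\<bar> \<le> 1" unfolding \<mu>_def by (intro Kint_bdd PP)
      ultimately show ?thesis using True by auto
    next
      case False
      have "Tm i j = (\<integral>x. \<integral>y. k x y \<partial>\<mu> j \<partial>\<mu> i)" unfolding Tm_def
      proof (rule PiM_two[OF pps _ that False])
        show "finite I" by (simp add: I_def)
        show "(\<lambda>(x, y). k x y) \<in> borel_measurable (\<mu> i \<Otimes>\<^sub>M \<mu> j)" by (rule k_meas') (auto simp: spm)
        show "\<And>x y. x \<in> space (\<mu> i) \<Longrightarrow> y \<in> space (\<mu> j) \<Longrightarrow> \<bar>k x y\<bar> \<le> 1" using k_bdd spm by auto
      qed
      then show ?thesis using False by (simp add: Kint_def)
    qed
    have Zpos: "0 \<le> (\<Sum>i\<in>I. \<Sum>j\<in>I. c i * c j * k (\<omega> i) (\<omega> j))" if "\<omega> \<in> space (PiM I \<mu>)" for \<omega>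
      using kernel om[OF that] unfolding pd_kernel_def I_def by auto
    have "0 \<le> (\<integral>\<omega>. (\<Sum>i\<in>I. \<Sum>j\<in>I. c i * c j * k (\<omega> i) (\<omega> j)) \<partial>PiM I \<mu>)"
      using Zpos by (intro integral_nonneg_AE AE_I2) auto
    also have "\<dots> = (\<Sum>i\<in>I. \<Sum>j\<in>I. c i * c j * Tm i j)"
      unfolding Tm_def using kintI
      by (simp add: Bochner_Integration.integral_sum integrable_sum)
    also have "\<dots> \<le> (\<Sum>i\<in>I. \<Sum>j\<in>I. c i * c j * Kint k (\<mu> i) (\<mu> j) + (if i = j then 2 * (c i)^2 else 0))"
    proof (intro sum_mono)
      fix i j assume ij: "i \<in> I" "j \<in> I"
      show "c i * c j * Tm i j \<le> c i * c j * Kint k (\<mu> i) (\<mu> j) + (if i = j then 2 * (c i)^2 else 0)"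
      proof (cases "i = j")
        case True
        then have "c i * c j \<ge> 0" by simp
        from mult_left_mono[OF Tm_le[OF ij] this] True show ?thesis by (simp add: power2_eq_square algebra_simps)
      next
        case False
        have "Tm i j = (\<integral>x. \<integral>y. k x y \<partial>\<mu> j \<partial>\<mu> i)" unfolding Tm_def
        proof (rule PiM_two[OF pps _ ij False])
          show "finite I" by (simp add: I_def)
          show "(\<lambda>(x, y). k x y) \<in> borel_measurable (\<mu> i \<Otimes>\<^sub>M \<mu> j)" by (rule k_meas') (auto simp: spm)
          show "\<And>x y. x \<in> space (\<mu> i) \<Longrightarrow> y \<in> space (\<mu> j) \<Longrightarrow> \<bar>k x y\<bar> \<le> 1" using k_bdd spm by auto
        qed
        then show ?thesis using False by (simp add: Kint_def)
      qed
    qed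
    also have "\<dots> = (\<Sum>i\<in>I. \<Sum>j\<in>I. c i * c j * Kint k (\<mu> i) (\<mu> j)) + 2 * (\<Sum>i\<in>I. (c i)^2)"
      by (simp add: sum.distrib sum_distrib_left I_def)
    also have "(\<Sum>i\<in>I. \<Sum>j\<in>I. c i * c j * Kint k (\<mu> i) (\<mu> j)) = \<Phi>"
    proof -
      have "(\<Sum>i\<in>I. \<Sum>j\<in>I. c i * c j * Kint k (\<mu> i) (\<mu> j))
          = (\<Sum>i\<in>I. real N * (\<Sum>l'<L. c i * (a l' / real N) * Kint k (\<mu> i) (Pl l')))"
      proof (rule sum.cong[OF refl])
        fix i
        show "(\<Sum>j\<in>I. c i * c j * Kint k (\<mu> i) (\<mu> j)) = real N * (\<Sum>l'<L. c i * (a l' / real N) * Kint k (\<mu> i) (Pl l'))"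
          unfolding I_def using sum_div_reindex[where F="\<lambda>l'. c i * (a l' / real N) * Kint k (\<mu> i) (Pl l')" and L=L and N=N]
          by (simp add: c_def \<mu>_def)
      qed
      also have "\<dots> = real N * (\<Sum>l<L. real N * (\<Sum>l'<L. (a l / real N) * (a l' / real N) * Kint k (Pl l) (Pl l')))"
        unfolding I_def using sum_div_reindex[where F="\<lambda>l. real N * (\<Sum>l'<L. (a l / real N) * (a l' / real N) * Kint k (Pl l) (Pl l'))" and L=L and N=N]
        by (simp add: c_def \<mu>_def)
      also have "\<dots> = \<Phi>"
      proof -
        have e: "\<And>x y z. real N * (real N * (x / real N * (y / real N) * z)) = x*y*z"
          using N by (simp add: field_simps)
        show ?thesis unfolding \<Phi>_def sum_distrib_left by (intro sum.cong refl e)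
      qed
      finally show ?thesis .
    qed
    also have "(\<Sum>i\<in>I. (c i)^2) = S / real N"
    proof -
      have "(\<Sum>i\<in>I. (c i)^2) = real N * (\<Sum>l<L. (a l / real N)^2)"
        unfolding I_def c_def by (rule sum_div_reindex)
      also have "\<dots> = S / real N"
      proof -
        have e: "\<And>x. real N * (x / real N)^2 = x^2 / real N"
          using N by (simp add: field_simps power2_eq_square)
        show ?thesis unfolding S_def by (simp add: sum_distrib_left e sum_divide_distrib)
      qed
      finally show ?thesis .
    qed
    finally have "0 \<le> \<Phi> + 2 * (S / real N)" .
    moreover have "- 2 * S / real N = - (2 * (S / real N))" by simp
    ultimately show ?thesis by linarith
  qed
  show ?thesis
  proof (rule ccontr)
    assume "\<not> 0 \<le> (\<Sum>l<L. \<Sum>l'<L. a l * a l' * Kint k (Pl l) (Pl l'))"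
    then have neg: "\<Phi> < 0" by (simp add: \<Phi>_def)
    have S0: "S \<ge> 0" unfolding S_def by (simp add: sum_nonneg)
    obtain N :: nat where N: "real N > 2 * S / (- \<Phi>)" using reals_Archimedean2 by blast
    have "2 * S / (- \<Phi>) \<ge> 0" using neg S0 by (intro divide_nonneg_pos) auto
    then have Npos: "N > 0" using N by linarith
    have "2 * S < real N * (- \<Phi>)"
      using pos_divide_less_eq[of "- \<Phi>" "2 * S" "real N"] neg N by linarith
    moreover have "- 2 * S / real N \<le> \<Phi>" by (rule key[OF Npos])
    then have "(- 2 * S) / real N \<le> \<Phi>" by simp
    then have "- 2 * S \<le> \<Phi> * real N" using Npos pos_divide_le_eq[of "real N" "- 2 * S" \<Phi>] by simp
    ultimately show False by (simp add: algebra_simps)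
  qed
qed

lemma mmd_inner_nonneg:
  assumes "prob_space P" "sets P = sets M" "prob_space Q" "sets Q = sets M"
  shows "0 \<le> Kint k P P - 2 * Kint k P Q + Kint k Q Q"
proof -
  have "0 \<le> (\<Sum>l<2::nat. \<Sum>l'<2::nat. (\<lambda>l. if l = 0 then 1 else - 1::real) l * (\<lambda>l. if l = 0 then 1 else - 1::real) l' *
     Kint k ((\<lambda>l. if l = 0 then P else Q) l) ((\<lambda>l. if l = 0 then P else Q) l'))"
    by (rule Kint_psd) (use assms in auto)
  also have "\<dots> = Kint k P P - Kint k P Q - Kint k Q P + Kint k Q Q"
    by (simp add: numeral_2_eq_2 lessThan_Suc)
  finally show ?thesis using Kint_sym[OF assms] by simp
qed

lemma mmd_sym:
  assumes "prob_space P" "sets P = sets M" "prob_space Q" "sets Q = sets M"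
  shows "mmd k P Q = mmd k Q P"
  unfolding mmd_Kint using Kint_sym[OF assms] by (simp add: algebra_simps)

lemma mmd_sq:
  assumes "prob_space P" "sets P = sets M" "prob_space Q" "sets Q = sets M"
  shows "(mmd k P Q)^2 = Kint k P P - 2 * Kint k P Q + Kint k Q Q"
  unfolding mmd_Kint using mmd_inner_nonneg[OF assms] by simp

lemma mmd_triangle:
  assumes "prob_space P" "sets P = sets M" "prob_space Q" "sets Q = sets M"
    "prob_space R" "sets R = sets M"
  shows "mmd k P R \<le> mmd k P Q + mmd k Q R"
proof -
  define X where "X = Kint k P P - 2 * Kint k P Q + Kint k Q Q"
  define Y where "Y = Kint k Q Q - 2 * Kint k Q R + Kint k R R"
  define Z where "Z = Kint k P P - 2 * Kint k P R + Kint k R R"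
  define W where "W = Kint k P Q + Kint k Q R - Kint k P R - Kint k Q Q"
  have X0: "X \<ge> 0" unfolding X_def by (rule mmd_inner_nonneg) (use assms in auto)
  have Y0: "Y \<ge> 0" unfolding Y_def by (rule mmd_inner_nonneg) (use assms in auto)
  have s1: "Kint k Q P = Kint k P Q" "Kint k R Q = Kint k Q R" "Kint k R P = Kint k P R"
    using Kint_sym assms by metis+
  have quad: "X + 2*t*W + t^2*Y \<ge> 0" for t
  proof -
    let ?a = "\<lambda>l::nat. if l = 0 then 1 else if l = 1 then t - 1 else - t"
    let ?P = "\<lambda>l::nat. if l = 0 then P else if l = 1 then Q else R"
    have "0 \<le> (\<Sum>l<3. \<Sum>l'<3. ?a l * ?a l' * Kint k (?P l) (?P l'))"
      by (rule Kint_psd) (use assms in auto)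
    also have "\<dots> = X + 2*t*W + t^2*Y"
      by (simp add: numeral_3_eq_3 lessThan_Suc s1 X_def Y_def W_def power2_eq_square algebra_simps)
    finally show ?thesis .
  qed
  have cs: "W^2 \<le> X*Y" by (rule quad_cs[OF quad X0 Y0])
  have "W \<le> sqrt X * sqrt Y"
  proof -
    have "W \<le> sqrt (W^2)" by simp
    also have "\<dots> \<le> sqrt (X*Y)" using cs by (rule real_sqrt_le_mono)
    finally show ?thesis by (simp add: real_sqrt_mult)
  qed
  have ZXY: "Z = X + Y + 2*W" unfolding X_def Y_def Z_def W_def by simp
  have "Z \<le> (sqrt X + sqrt Y)^2"
    using ZXY \<open>W \<le> sqrt X * sqrt Y\<close> X0 Y0 by (simp add: power2_eq_square algebra_simps)
  then have "sqrt Z \<le> sqrt X + sqrt Y"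
    using X0 Y0 by (metis real_sqrt_le_mono real_sqrt_ge_zero add_nonneg_nonneg real_sqrt_abs abs_of_nonneg)
  then show ?thesis unfolding mmd_Kint X_def Y_def Z_def .
qed

end

lemma weighted_dirac_eq:
  assumes w: "\<And>j. j < m \<Longrightarrow> w j \<ge> 0" and y: "\<And>j. j < m \<Longrightarrow> y j \<in> space M"
  shows "weighted_dirac M m y w = distr (point_measure {..<m} (\<lambda>j. ennreal (w j))) M y"
proof -
  let ?N = "distr (point_measure {..<m} (\<lambda>j. ennreal (w j))) M y"
  have ymeas: "y \<in> measurable (point_measure {..<m} (\<lambda>j. ennreal (w j))) M"
    using y by (auto simp: point_measure_def)
  have eq: "(\<Sum>j<m. ennreal (w j) * indicator A (y j)) = emeasure ?N A" if A: "A \<in> sets M" for A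
  proof -
    have "emeasure ?N A = emeasure (point_measure {..<m} (\<lambda>j. ennreal (w j))) (y -` A \<inter> {..<m})"
      using A ymeas by (simp add: emeasure_distr space_point_measure)
    also have "\<dots> = (\<Sum>j \<in> y -` A \<inter> {..<m}. ennreal (w j))"
      by (rule emeasure_point_measure_finite) auto
    also have "\<dots> = (\<Sum>j<m. ennreal (w j) * indicator A (y j))"
      by (rule sum.mono_neutral_cong_left) (auto simp: indicator_def)
    finally show ?thesis by simp
  qed
  have "weighted_dirac M m y w = measure_of (space M) (sets M) (emeasure ?N)"
    unfolding weighted_dirac_def
  proof (rule measure_of_eq)
    show "sets M \<subseteq> Pow (space M)" by (rule sets.space_closed)
    fix a assume "a \<in> sigma_sets (space M) (sets M)"
    then have "a \<in> sets M" by (simp add: sets.sigma_sets_eq)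
    then show "(\<Sum>j<m. ennreal (w j) * indicator a (y j)) = emeasure ?N a" by (rule eq)
  qed
  also have "\<dots> = ?N"
    using measure_of_of_measure[of ?N] by simp
  finally show ?thesis .
qed

lemma wd_prob:
  assumes w: "\<And>j. j < m \<Longrightarrow> w j \<ge> 0" "(\<Sum>j<m. w j) = 1" and y: "\<And>j. j < m \<Longrightarrow> y j \<in> space M"
  shows "prob_space (weighted_dirac M m y w)" "sets (weighted_dirac M m y w) = sets M"
proof -
  have ymeas: "y \<in> measurable (point_measure {..<m} (\<lambda>j. ennreal (w j))) M"
    using y by (auto simp: point_measure_def)
  have "prob_space (point_measure {..<m} (\<lambda>j. ennreal (w j)))"
  proof
    have "emeasure (point_measure {..<m} (\<lambda>j. ennreal (w j))) {..<m} = (\<Sum>j<m. ennreal (w j))"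
      by (rule emeasure_point_measure_finite) auto
    also have "\<dots> = ennreal (\<Sum>j<m. w j)" using w by (subst sum_ennreal) auto
    finally show "emeasure (point_measure {..<m} (\<lambda>j. ennreal (w j))) (space (point_measure {..<m} (\<lambda>j. ennreal (w j)))) = 1"
      using w by (simp add: space_point_measure)
  qed
  then show "prob_space (weighted_dirac M m y w)"
    using prob_space.prob_space_distr[OF _ ymeas] weighted_dirac_eq[OF w(1) y] by simp
  show "sets (weighted_dirac M m y w) = sets M"
    using weighted_dirac_eq[OF w(1) y] by simp
qed

lemma wd_integral:
  fixes f :: "'a \<Rightarrow> real"
  assumes w: "\<And>j. j < m \<Longrightarrow> w j \<ge> 0" and y: "\<And>j. j < m \<Longrightarrow> y j \<in> space M"
    and f: "f \<in> borel_measurable M"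
  shows "integral\<^sup>L (weighted_dirac M m y w) f = (\<Sum>j<m. w j * f (y j))"
proof -
  have ymeas: "y \<in> measurable (point_measure {..<m} (\<lambda>j. ennreal (w j))) M"
    using y by (auto simp: point_measure_def)
  have "integral\<^sup>L (weighted_dirac M m y w) f = integral\<^sup>L (point_measure {..<m} (\<lambda>j. ennreal (w j))) (\<lambda>j. f (y j))"
    using integral_distr[OF ymeas f] weighted_dirac_eq[OF w y] by simp
  also have "\<dots> = integral\<^sup>L (count_space {..<m}) (\<lambda>j. w j * f (y j))"
    unfolding point_measure_def by (subst integral_density) (auto simp: w)
  also have "\<dots> = (\<Sum>j<m. w j * f (y j))"
    by (rule lebesgue_integral_count_space_finite) simp
  finally show ?thesis .
qed

definition hfun :: "('a \<Rightarrow> 'a \<Rightarrow> real) \<Rightarrow> 'a measure \<Rightarrow> 'a \<Rightarrow> 'a \<Rightarrow> real" where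
  "hfun k P0 x x' = k x x' - (LINT z|P0. k z x) - (LINT z|P0. k z x') + Kint k P0 P0"

context
  fixes M :: "'a measure" and k :: "'a \<Rightarrow> 'a \<Rightarrow> real" and P0 :: "'a measure"
  assumes kernel: "pd_kernel M k"
    and k_meas: "(\<lambda>(x, y). k x y) \<in> borel_measurable (M \<Otimes>\<^sub>M M)"
    and k_bdd: "\<forall>x\<in>space M. \<forall>y\<in>space M. \<bar>k x y\<bar> \<le> 1"
    and P0: "prob_space P0" "sets P0 = sets M"
begin

lemma spP0: "space P0 = space M" using sets_eq_imp_space_eq[OF P0(2)] .

lemma ksw_meas: "(\<lambda>(x, y). k y x) \<in> borel_measurable (M \<Otimes>\<^sub>M M)"
proof -
  have "(\<lambda>x. (snd x, fst x)) \<in> measurable (M \<Otimes>\<^sub>M M) (M \<Otimes>\<^sub>M M)" by simp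
  from measurable_compose[OF this k_meas] show ?thesis by (simp add: case_prod_beta)
qed

lemma g1_meas: "(\<lambda>y. LINT z|P0. k z y) \<in> borel_measurable M"
proof -
  interpret P0: prob_space P0 by (rule P0)
  have "(\<lambda>(y, z). k z y) \<in> borel_measurable (M \<Otimes>\<^sub>M P0)"
    using ksw_meas by (simp add: measurable_def sets_pair_measure_cong[OF refl P0(2)] space_pair_measure spP0)
  then show ?thesis by (rule P0.borel_measurable_lebesgue_integral)
qed

lemma g1_bdd: "y \<in> space M \<Longrightarrow> \<bar>LINT z|P0. k z y\<bar> \<le> 1"
  using P0 k_bdd spP0 by (intro abs_int_bound k_meas1[OF kernel k_meas k_bdd]) auto

lemma c0_bdd: "\<bar>Kint k P0 P0\<bar> \<le> 1"
  using Kint_bdd[OF kernel k_meas k_bdd] P0 by blast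

lemma hfun_meas: "(\<lambda>(x, y). hfun k P0 x y) \<in> borel_measurable (M \<Otimes>\<^sub>M M)"
  unfolding hfun_def using k_meas g1_meas
  by (auto intro!: borel_measurable_add borel_measurable_diff measurable_compose[OF measurable_fst]
       measurable_compose[OF measurable_snd] simp: case_prod_beta)

lemma hfun_bdd: "x \<in> space M \<Longrightarrow> y \<in> space M \<Longrightarrow> \<bar>hfun k P0 x y\<bar> \<le> 4"
  using k_bdd g1_bdd[of x] g1_bdd[of y] c0_bdd unfolding hfun_def by fastforce

lemma mmd_wd:
  assumes w: "\<And>j. j < m \<Longrightarrow> w j \<ge> 0" "(\<Sum>j<m. w j) = 1" and y: "\<And>j. j < m \<Longrightarrow> y j \<in> space M"
  shows "(mmd k P0 (weighted_dirac M m y w))^2 = (\<Sum>i<m. \<Sum>j<m. w i * w j * hfun k P0 (y i) (y j))"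
proof -
  let ?P = "weighted_dirac M m y w"
  let ?g = "\<lambda>y. LINT z|P0. k z y"
  note wp = wd_prob[OF w y]
  have kP: "(\<lambda>x. k x (y j)) \<in> borel_measurable P0" if "j < m" for j
    using k_meas1[OF kernel k_meas k_bdd P0(2) y[OF that]] .
  have kM: "(\<lambda>x'. k x x') \<in> borel_measurable M" if "x \<in> space M" for x
    using k_meas2[OF kernel k_meas k_bdd refl that] .
  have kI: "integrable P0 (\<lambda>x. k x (y j))" if "j < m" for j
    using kP[OF that] k_bdd y[OF that] spP0 by (intro int_bounded[where B=1] P0(1)) auto
  have K1: "Kint k P0 ?P = (\<Sum>j<m. w j * ?g (y j))"
  proof -
    have "Kint k P0 ?P = (LINT x|P0. (\<Sum>j<m. w j * k x (y j)))"
      unfolding Kint_def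
      by (rule Bochner_Integration.integral_cong[OF refl], rule wd_integral[OF w(1) y], use kM spP0 in auto)
    also have "\<dots> = (\<Sum>j<m. w j * ?g (y j))"
      using kI by (simp add: Bochner_Integration.integral_sum)
    finally show ?thesis .
  qed
  have K2: "Kint k ?P ?P = (\<Sum>i<m. w i * (\<Sum>j<m. w j * k (y i) (y j)))"
  proof -
    have "Kint k ?P ?P = (LINT x|?P. (\<Sum>j<m. w j * k x (y j)))"
      unfolding Kint_def
    proof (rule Bochner_Integration.integral_cong[OF refl])
      fix x assume "x \<in> space ?P"
      then have "x \<in> space M" using sets_eq_imp_space_eq[OF wp(2)] by simp
      then show "(LINT y|?P. k x y) = (\<Sum>j<m. w j * k x (y j))"
        using wd_integral[OF w(1) y kM] by simp
    qed
    also have "\<dots> = (\<Sum>i<m. w i * (\<Sum>j<m. w j * k (y i) (y j)))"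
    proof (rule wd_integral[OF w(1) y])
      show "(\<lambda>x. \<Sum>j<m. w j * k x (y j)) \<in> borel_measurable M"
        using k_meas1[OF kernel k_meas k_bdd refl] y by (auto intro!: borel_measurable_sum borel_measurable_times)
    qed
    finally show ?thesis .
  qed
  have sq: "(mmd k P0 ?P)^2 = Kint k P0 P0 - 2 * Kint k P0 ?P + Kint k ?P ?P"
    by (rule mmd_sq[OF kernel k_meas k_bdd P0 wp])
  have a1: "(\<Sum>i<m. \<Sum>j<m. w i * w j * ?g (y i)) = (\<Sum>i<m. w i * ?g (y i))"
  proof (rule sum.cong[OF refl])
    fix i
    have "(\<Sum>j<m. w i * w j * ?g (y i)) = (\<Sum>j<m. (w i * ?g (y i)) * w j)"
      by (rule sum.cong) auto
    also have "\<dots> = w i * ?g (y i) * (\<Sum>j<m. w j)"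
      by (rule sum_distrib_left[symmetric])
    finally have "(\<Sum>j<m. w i * w j * ?g (y i)) = w i * ?g (y i) * (\<Sum>j<m. w j)" .
    then show "(\<Sum>j<m. w i * w j * ?g (y i)) = w i * ?g (y i)" using w(2) by simp
  qed
  have a2: "(\<Sum>i<m. \<Sum>j<m. w i * w j * ?g (y j)) = (\<Sum>j<m. w j * ?g (y j))"
  proof -
    have "(\<Sum>i<m. \<Sum>j<m. w i * w j * ?g (y j)) = (\<Sum>i<m. w i * (\<Sum>j<m. w j * ?g (y j)))"
      by (simp add: sum_distrib_left algebra_simps)
    also have "\<dots> = (\<Sum>j<m. w j * ?g (y j))" using w(2) by (simp add: sum_distrib_right[symmetric])
    finally show ?thesis .
  qed
  have a3: "(\<Sum>i<m. \<Sum>j<m. w i * w j * Kint k P0 P0) = Kint k P0 P0"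
  proof -
    have "(\<Sum>i<m. \<Sum>j<m. w i * w j * Kint k P0 P0) = (\<Sum>i<m. w i) * (\<Sum>j<m. w j) * Kint k P0 P0"
      by (simp add: sum_distrib_left sum_distrib_right mult.commute mult.left_commute)
    then show ?thesis using w(2) by simp
  qed
  have a4: "(\<Sum>i<m. \<Sum>j<m. w i * w j * k (y i) (y j)) = (\<Sum>i<m. w i * (\<Sum>j<m. w j * k (y i) (y j)))"
    by (simp add: sum_distrib_left algebra_simps)
  have "(\<Sum>i<m. \<Sum>j<m. w i * w j * hfun k P0 (y i) (y j)) =
     (\<Sum>i<m. \<Sum>j<m. w i * w j * k (y i) (y j)) - (\<Sum>i<m. \<Sum>j<m. w i * w j * ?g (y i))
     - (\<Sum>i<m. \<Sum>j<m. w i * w j * ?g (y j)) + (\<Sum>i<m. \<Sum>j<m. w i * w j * Kint k P0 P0)"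
    unfolding hfun_def by (simp add: algebra_simps sum.distrib sum_subtractf)
  also have "\<dots> = Kint k P0 P0 - 2 * Kint k P0 ?P + Kint k ?P ?P"
    unfolding a1 a2 a3 a4 K1 K2 by simp
  finally show ?thesis using sq by simp
qed

end

lemma gd_meas[measurable]: "gamma_density b \<in> borel_measurable borel"
  unfolding gamma_density_def by measurable

lemma gd_nonneg: "b > 0 \<Longrightarrow> gamma_density b x \<ge> 0"
  unfolding gamma_density_def by (auto intro!: divide_nonneg_pos mult_nonneg_nonneg Gamma_real_pos)

lemma gd_pos: "gamma_density b x \<noteq> 0 \<Longrightarrow> x > 0"
  unfolding gamma_density_def by (auto split: if_splits)

lemma gd_nn_integral:
  assumes b: "b > 0"
  shows "(\<integral>\<^sup>+x. ennreal (gamma_density b x) \<partial>lborel) = 1"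
proof -
  have G: "Gamma b > 0" using b by (rule Gamma_real_pos)
  have hi: "((\<lambda>t. t powr (b - 1) / exp t / Gamma b) has_integral Gamma b / Gamma b) {0..}"
    using Gamma_integral_real[OF b] by (rule has_integral_divide)
  have "integral\<^sup>N lborel (\<lambda>x. indicator {0..} x * (x powr (b - 1) / exp x / Gamma b)) = Gamma b / Gamma b"
    by (rule nn_integral_has_integral_lebesgue[OF _ hi]) (use G in auto)
  moreover have "(\<lambda>x. ennreal (indicator {0..} x * (x powr (b - 1) / exp x / Gamma b))) = (\<lambda>x. ennreal (gamma_density b x))"
  proof
    fix x :: real
    show "ennreal (indicator {0..} x * (x powr (b - 1) / exp x / Gamma b)) = ennreal (gamma_density b x)"
      by (cases "x > 0"; cases "x = 0") (auto simp: gamma_density_def exp_minus field_simps indicator_def)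
  qed
  ultimately show ?thesis using G by simp
qed

lemma gd_integrable: "b > 0 \<Longrightarrow> integrable lborel (gamma_density b)"
  by (rule integrableI_nonneg) (auto simp: gd_nn_integral gd_nonneg)

lemma gd_integral: "b > 0 \<Longrightarrow> integral\<^sup>L lborel (gamma_density b) = 1"
  by (subst integral_eq_nn_integral) (auto simp: gd_nn_integral gd_nonneg)

lemma gd_prob: "b > 0 \<Longrightarrow> prob_space (density lborel (gamma_density b))"
  by (rule prob_spaceI) (simp add: emeasure_density gd_nn_integral)

lemma gd_shift: 
  assumes b: "b > 0"
  shows "x * gamma_density b x = b * gamma_density (b + 1) x"
proof (cases "x > 0")
  case True
  have "b \<notin> \<int>\<^sub>\<le>\<^sub>0" using b nonpos_Ints_nonpos by force
  then have "Gamma (b + 1) = b * Gamma b" using Gamma_plus1[of b] by simp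
  moreover have "x * x powr (b - 1) = x powr b" using True by (simp add: powr_mult_base)
  moreover have "Gamma b > 0" using b by (rule Gamma_real_pos)
  ultimately show ?thesis using True b by (simp add: gamma_density_def field_simps)
next
  case False then show ?thesis by (simp add: gamma_density_def)
qed

lemma gd_mom1:
  assumes b: "b > 0"
  shows "integrable (density lborel (gamma_density b)) (\<lambda>x. x)"
    "integral\<^sup>L (density lborel (gamma_density b)) (\<lambda>x. x) = b"
proof -
  have eq: "(\<lambda>x. gamma_density b x * x) = (\<lambda>x. b * gamma_density (b + 1) x)"
    using gd_shift[OF b] by (auto simp: mult.commute)
  show "integrable (density lborel (gamma_density b)) (\<lambda>x. x)"
    using b by (subst integrable_density) (auto simp: eq gd_nonneg gd_integrable)
  show "integral\<^sup>L (density lborel (gamma_density b)) (\<lambda>x. x) = b"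
    using b by (subst integral_density) (auto simp: eq gd_nonneg gd_integral)
qed

lemma gd_mom2:
  assumes b: "b > 0"
  shows "integrable (density lborel (gamma_density b)) (\<lambda>x. x^2)"
    "integral\<^sup>L (density lborel (gamma_density b)) (\<lambda>x. x^2) = b * (b + 1)"
proof -
  have b1: "b + 1 > 0" using b by simp
  have eq: "(\<lambda>x. gamma_density b x * x^2) = (\<lambda>x. b * (b + 1) * gamma_density (b + 1 + 1) x)"
  proof
    fix x
    have "gamma_density b x * x^2 = x * (x * gamma_density b x)" by (simp add: power2_eq_square)
    also have "\<dots> = b * (x * gamma_density (b + 1) x)" using gd_shift[OF b] by simp
    also have "\<dots> = b * ((b + 1) * gamma_density (b + 1 + 1) x)" using gd_shift[OF b1] by simp
    finally show "gamma_density b x * x^2 = b * (b + 1) * gamma_density (b + 1 + 1) x" by simp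
  qed
  have b2: "b + 1 + 1 > 0" using b by simp
  show "integrable (density lborel (gamma_density b)) (\<lambda>x. x^2)"
    using b b2 by (subst integrable_density) (auto simp: eq gd_nonneg gd_integrable)
  show "integral\<^sup>L (density lborel (gamma_density b)) (\<lambda>x. x^2) = b * (b + 1)"
    using b b2 by (subst integral_density) (auto simp: eq gd_nonneg gd_integral)
qed

lemma gd_AE_pos: "AE x in density lborel (gamma_density b). x > 0"
  by (subst AE_density) (auto intro!: AE_I2 gd_pos[of b])

lemma emeasure_distr_le:
  "emeasure (distr M N f) A \<le> emeasure M (f -` A \<inter> space M)"
  unfolding distr_def emeasure_measure_of_conv by auto

lemma integral_le_enn2real_nn:
  fixes f :: "'a \<Rightarrow> real"
  assumes "\<And>x. f x \<ge> 0"
  shows "integral\<^sup>L M f \<le> enn2real (\<integral>\<^sup>+x. ennreal (f x) \<partial>M)"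
proof (cases "integrable M f")
  case True
  then show ?thesis using assms by (subst integral_eq_nn_integral) auto
next
  case False
  then show ?thesis by (simp add: not_integrable_integral_eq)
qed

lemma sn_nonneg: "j < m \<Longrightarrow> simplex_normalize m g j \<ge> 0"
  unfolding simplex_normalize_def by (auto intro!: divide_nonneg_pos)

lemma sn_sum: "m > 0 \<Longrightarrow> (\<Sum>j<m. simplex_normalize m g j) = 1"
  unfolding simplex_normalize_def by (auto simp: sum_divide_distrib[symmetric])

lemma sn_ext: "simplex_normalize m g \<in> extensional {..<m}"
  unfolding simplex_normalize_def by auto

lemma sn_pos: "(\<And>j. j < m \<Longrightarrow> g j > 0) \<Longrightarrow> m > 0 \<Longrightarrow> j < m \<Longrightarrow> simplex_normalize m g j = g j / (\<Sum>i<m. g i)"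
proof -
  assume g: "\<And>j. j < m \<Longrightarrow> g j > 0" and m: "m > 0" and j: "j < m"
  have "(\<Sum>i<m. g i) > 0" using g m by (intro sum_pos) auto
  then show ?thesis using g j unfolding simplex_normalize_def by (auto simp: less_imp_le)
qed

lemma sn_meas: "simplex_normalize m \<in> measurable (PiM {..<m} (\<lambda>_. borel)) (PiM {..<m} (\<lambda>_. borel :: real measure))"
  unfolding simplex_normalize_def by measurable

locale mmdset =
  fixes M :: "'a measure"
    and k :: "'a \<Rightarrow> 'a \<Rightarrow> real"
    and Theta :: "'b set"
    and Pth :: "'b \<Rightarrow> 'a measure"
    and P0 :: "'a measure"
    and thstar :: "'a measure \<Rightarrow> 'b"
  assumes kernel: "pd_kernel M k"
    and k_meas: "(\<lambda>(x, y). k x y) \<in> borel_measurable (M \<Otimes>\<^sub>M M)"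
    and k_bdd: "\<forall>x\<in>space M. \<forall>y\<in>space M. \<bar>k x y\<bar> \<le> 1"
    and model: "\<forall>\<theta>\<in>Theta. prob_space (Pth \<theta>) \<and> sets (Pth \<theta>) = sets M"
    and P0: "prob_space P0" "sets P0 = sets M"
    and well_spec: "(INF \<theta>\<in>Theta. mmd k (Pth \<theta>) P0) = 0"
    and thstar_min: "\<forall>Q\<in>space (prob_algebra M). thstar Q \<in> Theta \<and>
                        (\<forall>\<theta>\<in>Theta. (mmd k Q (Pth (thstar Q)))\<^sup>2 \<le> (mmd k Q (Pth \<theta>))\<^sup>2)"
begin

lemma mmd_nonneg': "prob_space P \<Longrightarrow> sets P = sets M \<Longrightarrow> prob_space Q \<Longrightarrow> sets Q = sets M \<Longrightarrow> 0 \<le> mmd k P Q"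
  unfolding mmd_Kint using mmd_inner_nonneg[OF kernel k_meas k_bdd] by simp

lemma thstar_bound:
  assumes P: "P \<in> space (prob_algebra M)"
  shows "mmd k P0 (Pth (thstar P)) \<le> 2 * mmd k P0 P"
proof -
  have Pp: "prob_space P" "sets P = sets M" using P by (auto simp: space_prob_algebra)
  have th: "thstar P \<in> Theta" using thstar_min P by blast
  have Pt: "prob_space (Pth (thstar P))" "sets (Pth (thstar P)) = sets M" using model th by auto
  have le: "mmd k P0 (Pth (thstar P)) \<le> 2 * mmd k P0 P + mmd k (Pth \<theta>) P0" if \<theta>: "\<theta> \<in> Theta" for \<theta>
  proof -
    have Ptt: "prob_space (Pth \<theta>)" "sets (Pth \<theta>) = sets M" using model \<theta> by auto
    have "(mmd k P (Pth (thstar P)))^2 \<le> (mmd k P (Pth \<theta>))^2" using thstar_min P \<theta> by blast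
    then have 1: "mmd k P (Pth (thstar P)) \<le> mmd k P (Pth \<theta>)"
      using mmd_nonneg'[OF Pp Pt] mmd_nonneg'[OF Pp Ptt] by (simp add: power2_le_iff_abs_le)
    have "mmd k P0 (Pth (thstar P)) \<le> mmd k P0 P + mmd k P (Pth (thstar P))"
      by (rule mmd_triangle[OF kernel k_meas k_bdd P0 Pp Pt])
    also have "\<dots> \<le> mmd k P0 P + mmd k P (Pth \<theta>)" using 1 by simp
    also have "mmd k P (Pth \<theta>) \<le> mmd k P P0 + mmd k P0 (Pth \<theta>)"
      by (rule mmd_triangle[OF kernel k_meas k_bdd Pp P0 Ptt])
    also have "mmd k P P0 = mmd k P0 P" by (rule mmd_sym[OF kernel k_meas k_bdd Pp P0])
    also have "mmd k P0 (Pth \<theta>) = mmd k (Pth \<theta>) P0" by (rule mmd_sym[OF kernel k_meas k_bdd P0 Ptt])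
    finally show ?thesis by simp
  qed
  show ?thesis
  proof (rule field_le_epsilon)
    fix e :: real assume e: "0 < e"
    have ne: "Theta \<noteq> {}" using th by auto
    have "Inf ((\<lambda>\<theta>. mmd k (Pth \<theta>) P0) ` Theta) < e" using well_spec e by simp
    then obtain t where "t \<in> (\<lambda>\<theta>. mmd k (Pth \<theta>) P0) ` Theta" "t < e"
      using cInf_lessD[of "(\<lambda>\<theta>. mmd k (Pth \<theta>) P0) ` Theta" e] ne by auto
    then obtain \<theta> where "\<theta> \<in> Theta" "mmd k (Pth \<theta>) P0 < e" by auto
    with le[of \<theta>] show "mmd k P0 (Pth (thstar P)) \<le> 2 * mmd k P0 P + e" by simp
  qed
qed

end

definition aa :: "real \<Rightarrow> nat \<Rightarrow> nat \<Rightarrow> nat \<Rightarrow> real" where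
  "aa \<alpha> T n = (\<lambda>j. if j < n then 1 else \<alpha> / real T)"

definition Gm :: "real \<Rightarrow> nat \<Rightarrow> nat \<Rightarrow> (nat \<Rightarrow> real) measure" where
  "Gm \<alpha> T n = PiM {..<n+T} (\<lambda>j. density lborel (gamma_density (aa \<alpha> T n j)))"

definition yv :: "nat \<Rightarrow> (nat \<Rightarrow> 'a) \<Rightarrow> (nat \<Rightarrow> 'a) \<Rightarrow> nat \<Rightarrow> 'a" where
  "yv n x xt = (\<lambda>j. if j < n then x j else xt (j - n))"

lemma sum_sq_div:
  fixes g :: "nat \<Rightarrow> real"
  shows "(\<Sum>i<m. \<Sum>j<m. (g i / S) * (g j / S) * h i j) = (\<Sum>i<m. \<Sum>j<m. g i * g j * h i j) / S^2"
proof -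
  have "(\<Sum>i<m. \<Sum>j<m. (g i / S) * (g j / S) * h i j) = (\<Sum>i<m. \<Sum>j<m. g i * g j * h i j / S^2)"
    by (intro sum.cong refl) (simp add: power2_eq_square)
  also have "\<dots> = (\<Sum>i<m. \<Sum>j<m. g i * g j * h i j) / S^2"
    by (simp add: sum_divide_distrib)
  finally show ?thesis .
qed

lemma Gm_sets: "sets (Gm \<alpha> T n) = sets (PiM {..<n+T} (\<lambda>_. borel))"
  unfolding Gm_def by (rule sets_PiM_cong) auto

lemma aa_pos: "\<alpha> > 0 \<Longrightarrow> T \<ge> 1 \<Longrightarrow> aa \<alpha> T n j > 0"
  unfolding aa_def by auto

lemma Gm_pps: "\<alpha> > 0 \<Longrightarrow> T \<ge> 1 \<Longrightarrow> product_prob_space (\<lambda>j. density lborel (gamma_density (aa \<alpha> T n j)))"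
  unfolding product_prob_space_def product_prob_space_axioms_def product_sigma_finite_def
  by (auto intro!: gd_prob aa_pos prob_space_imp_sigma_finite)

lemma Gm_prob: "\<alpha> > 0 \<Longrightarrow> T \<ge> 1 \<Longrightarrow> prob_space (Gm \<alpha> T n)"
  unfolding Gm_def by (rule prob_space_PiM) (auto intro!: gd_prob aa_pos)

locale mmdset2 = mmdset +
  fixes F :: "'a measure" and \<alpha> :: real and T :: nat
  assumes alpha: "\<alpha> > 0" and T: "T \<ge> 1" and F: "prob_space F" "sets F = sets M"
begin

abbreviation "Fs \<equiv> PiM {..<T} (\<lambda>_. F)"

lemma spF: "space F = space M" using sets_eq_imp_space_eq[OF F(2)] .

lemma Fs_prob: "prob_space Fs" by (rule prob_space_PiM) (use F in auto)

lemma yv_space: "(\<And>j. j < n \<Longrightarrow> x j \<in> space M) \<Longrightarrow> xt \<in> space Fs \<Longrightarrow> j < n + T \<Longrightarrow> yv n x xt j \<in> space M"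
  unfolding yv_def by (auto simp: space_PiM PiE_iff spF)

lemma yv_meas:
  assumes x: "\<And>j. j < n \<Longrightarrow> x j \<in> space M" and j: "j < n + T"
  shows "(\<lambda>xt. yv n x xt j) \<in> measurable Fs M"
proof (cases "j < n")
  case True then show ?thesis using x by (simp add: yv_def)
next
  case False
  then have "j - n \<in> {..<T}" using j by auto
  from measurable_component_singleton[OF this, of "\<lambda>_. F"]
  have "(\<lambda>xt. xt (j - n)) \<in> measurable Fs M" by (simp add: measurable_cong_sets[OF refl F(2)])
  then show ?thesis using False by (simp add: yv_def)
qed

lemma hh_meas:
  assumes x: "\<And>j. j < n \<Longrightarrow> x j \<in> space M" and ij: "i < n + T" "j < n + T"
  shows "(\<lambda>xt. hfun k P0 (yv n x xt i) (yv n x xt j)) \<in> borel_measurable Fs"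
  using measurable_compose[OF measurable_Pair[OF yv_meas[OF x ij(1)] yv_meas[OF x ij(2)]]
      hfun_meas[OF kernel k_meas k_bdd P0]] by simp

lemma hh_bdd:
  assumes x: "\<And>j. j < n \<Longrightarrow> x j \<in> space M" and ij: "i < n + T" "j < n + T" and xt: "xt \<in> space Fs"
  shows "\<bar>hfun k P0 (yv n x xt i) (yv n x xt j)\<bar> \<le> 4"
  by (rule hfun_bdd[OF kernel k_meas k_bdd P0]) (use yv_space[OF x xt] ij in auto)

end

lemma PiM_one_int:
  fixes f :: "'a \<Rightarrow> real"
  assumes "product_prob_space M" "i \<in> I" "integrable (M i) f"
  shows "integrable (PiM I M) (\<lambda>\<omega>. f (\<omega> i))"
proof -
  interpret product_prob_space M by fact
  have "integrable (distr (PiM I M) (M i) (\<lambda>\<omega>. \<omega> i)) f" using PiM_component[OF assms(2)] assms(3) by simp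
  then show ?thesis
    by (subst (asm) integrable_distr_eq) (auto intro: measurable_component_singleton assms borel_measurable_integrable)
qed

lemma PiM_prod2_int:
  fixes \<phi> \<psi> :: "'a \<Rightarrow> real"
  assumes "product_prob_space M" "finite I" "i \<in> I" "j \<in> I" "i \<noteq> j"
    "integrable (M i) \<phi>" "integrable (M j) \<psi>"
  shows "integrable (PiM I M) (\<lambda>\<omega>. \<phi> (\<omega> i) * \<psi> (\<omega> j))"
proof -
  interpret product_prob_space M by fact
  define g where "g = (\<lambda>l. if l = i then \<phi> else if l = j then \<psi> else (\<lambda>_. 1::real))"
  have eq: "(\<Prod>l\<in>I. g l (\<omega> l)) = \<phi> (\<omega> i) * \<psi> (\<omega> j)" for \<omega>
  proof -
    have "(\<Prod>l\<in>I. g l (\<omega> l)) = g i (\<omega> i) * (\<Prod>l\<in>I-{i}. g l (\<omega> l))"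
      using assms by (simp add: prod.remove)
    also have "(\<Prod>l\<in>I-{i}. g l (\<omega> l)) = g j (\<omega> j) * (\<Prod>l\<in>I-{i}-{j}. g l (\<omega> l))"
      using assms by (subst prod.remove[of _ j]) auto
    also have "(\<Prod>l\<in>I-{i}-{j}. g l (\<omega> l)) = 1"
      by (rule prod.neutral) (auto simp: g_def)
    finally show ?thesis using assms by (simp add: g_def)
  qed
  have "integrable (PiM I M) (\<lambda>\<omega>. (\<Prod>l\<in>I. g l (\<omega> l)))"
    by (rule product_integrable_prod) (use assms in \<open>auto simp: g_def\<close>)
  then show ?thesis using eq by simp
qed

lemma Gm_int:
  assumes "\<alpha> > 0" "T \<ge> 1" "i < n + T" "j < n + T"
  shows "integrable (Gm \<alpha> T n) (\<lambda>g. g i * g j)"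
proof -
  note pps = Gm_pps[OF assms(1,2), of n]
  have ai: "aa \<alpha> T n i > 0" "aa \<alpha> T n j > 0" using aa_pos assms by auto
  show ?thesis
  proof (cases "i = j")
    case True
    have "integrable (Gm \<alpha> T n) (\<lambda>g. (g i)^2)"
      unfolding Gm_def using assms by (intro PiM_one_int[OF pps] gd_mom2 ai) auto
    then show ?thesis using True by (simp add: power2_eq_square)
  next
    case False
    show ?thesis
      unfolding Gm_def using assms False by (intro PiM_prod2_int[OF pps] gd_mom1 ai) auto
  qed
qed

lemma Gm_int1:
  assumes "\<alpha> > 0" "T \<ge> 1" "i < n + T"
  shows "integrable (Gm \<alpha> T n) (\<lambda>g. g i)"
  unfolding Gm_def using assms by (intro PiM_one_int[OF Gm_pps[OF assms(1,2)]] gd_mom1 aa_pos) auto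

lemma Gm_mom:
  assumes "\<alpha> > 0" "T \<ge> 1" "i < n + T" "j < n + T"
  shows "(\<integral>g. g i * g j \<partial>Gm \<alpha> T n) = (if i = j then aa \<alpha> T n i * (aa \<alpha> T n i + 1) else aa \<alpha> T n i * aa \<alpha> T n j)"
proof -
  note pps = Gm_pps[OF assms(1,2), of n]
  have ai: "aa \<alpha> T n i > 0" "aa \<alpha> T n j > 0" using aa_pos assms by auto
  show ?thesis
  proof (cases "i = j")
    case True
    have "(\<integral>g. (g i)^2 \<partial>Gm \<alpha> T n) = aa \<alpha> T n i * (aa \<alpha> T n i + 1)"
      unfolding Gm_def using assms by (subst PiM_one[OF pps]) (auto intro: gd_mom2 ai)
    then show ?thesis using True by (simp add: power2_eq_square)
  next
    case False
    have "(\<integral>g. g i * g j \<partial>Gm \<alpha> T n) = aa \<alpha> T n i * aa \<alpha> T n j"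
      unfolding Gm_def using assms False
      by (subst PiM_prod2[OF pps]) (auto intro: gd_mom1 ai simp: gd_mom1(2)[OF ai(1)] gd_mom1(2)[OF ai(2)])
    then show ?thesis using False by simp
  qed
qed

lemma Gm_mom1:
  assumes "\<alpha> > 0" "T \<ge> 1" "i < n + T"
  shows "(\<integral>g. g i \<partial>Gm \<alpha> T n) = aa \<alpha> T n i"
proof -
  have ai: "aa \<alpha> T n i > 0" using aa_pos assms by auto
  show ?thesis
  unfolding Gm_def using assms by (subst PiM_one[OF Gm_pps[OF assms(1,2)]]) (auto intro: gd_mom1 ai simp: gd_mom1(2)[OF ai])
qed

lemma Gm_AE_pos:
  assumes "\<alpha> > 0" "T \<ge> 1"
  shows "AE g in Gm \<alpha> T n. \<forall>j<n+T. g j > 0"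
proof -
  interpret product_prob_space "\<lambda>j. density lborel (gamma_density (aa \<alpha> T n j))" "{..<n+T}"
    using Gm_pps[OF assms] by (simp add: product_prob_space_def)
  have "\<forall>j\<in>{..<n+T}. AE g in Gm \<alpha> T n. g j > 0"
  proof
    fix j assume j: "j \<in> {..<n+T}"
    show "AE g in Gm \<alpha> T n. g j > 0"
      unfolding Gm_def using AE_component[OF j, of "\<lambda>x. x > 0"] gd_AE_pos by simp
  qed
  then have "AE g in Gm \<alpha> T n. \<forall>j\<in>{..<n+T}. g j > 0"
    by (subst AE_finite_all) auto
  then show ?thesis by (rule AE_mp) (auto intro!: AE_I2)
qed

context mmdset2 begin

lemma per_x:
  assumes n: "n \<ge> 1" and x: "\<And>j. j < n \<Longrightarrow> x j \<in> space M" and eps: "\<epsilon> > 0"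
  defines "Z \<equiv> {g \<in> space (Gm \<alpha> T n). (\<exists>j<n+T. g j \<le> 0) \<or> (\<Sum>i<n. g i) < real n / 2}"
    and "c \<equiv> (real n / 2)^2 * \<epsilon>^2 / 4"
  shows "emeasure (approx_posterior M F \<alpha> T n x) {Q \<in> space (prob_algebra M). mmd k P0 (Pth (thstar Q)) > \<epsilon>}
     \<le> emeasure (Gm \<alpha> T n) Z + ennreal ((\<Sum>i<n+T. \<Sum>j<n+T. (\<integral>g. g i * g j \<partial>Gm \<alpha> T n) *
             (\<integral>xt. hfun k P0 (yv n x xt i) (yv n x xt j) \<partial>Fs)) / c) \<and>
     0 \<le> (\<Sum>i<n+T. \<Sum>j<n+T. (\<integral>g. g i * g j \<partial>Gm \<alpha> T n) *
             (\<integral>xt. hfun k P0 (yv n x xt i) (yv n x xt j) \<partial>Fs))"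
proof -
  define m where "m = n + T"
  have m: "m > 0" using n by (simp add: m_def)
  define G where "G = Gm \<alpha> T n"
  define D where "D = dirichlet m (aa \<alpha> T n)"
  define hh where "hh = (\<lambda>i j xt. hfun k P0 (yv n x xt i) (yv n x xt j))"
  define H where "H = (\<lambda>i j. \<integral>xt. hh i j xt \<partial>Fs)"
  define Qf where "Qf = (\<lambda>g xt. \<Sum>i<m. \<Sum>j<m. g i * g j * hh i j xt)"
  define q where "q = (\<lambda>g. \<Sum>i<m. \<Sum>j<m. g i * g j * H i j)"
  define A where "A = {Q \<in> space (prob_algebra M). mmd k P0 (Pth (thstar Q)) > \<epsilon>}"
  define f where "f = (\<lambda>(w, xt). weighted_dirac M m (yv n x xt) w)"
  define N where "N = D \<Otimes>\<^sub>M Fs"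
  have c: "c > 0" using n eps by (simp add: c_def)
  interpret Fs: prob_space Fs by (rule Fs_prob)
  interpret G: prob_space G unfolding G_def by (rule Gm_prob[OF alpha T])
  have Gsets: "sets G = sets (PiM {..<m} (\<lambda>_. borel))" unfolding G_def m_def by (rule Gm_sets)
  have snG: "simplex_normalize m \<in> measurable G (PiM {..<m} (\<lambda>_. borel))"
    using sn_meas[of m] by (simp add: measurable_cong_sets[OF Gsets refl])
  have D_eq: "D = distr G (PiM {..<m} (\<lambda>_. borel)) (simplex_normalize m)"
    unfolding D_def dirichlet_def G_def Gm_def m_def ..
  interpret D: prob_space D unfolding D_eq by (rule G.prob_space_distr[OF snG])
  have Dsets: "sets D = sets (PiM {..<m} (\<lambda>_. borel))" unfolding D_eq by simp
  have ap: "approx_posterior M F \<alpha> T n x = distr N (prob_algebra M) f"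
    unfolding approx_posterior_def N_def D_def f_def m_def yv_def aa_def ..
  have hh_m: "hh i j \<in> borel_measurable Fs" if "i < m" "j < m" for i j
    unfolding hh_def using hh_meas[OF x] that by (simp add: m_def)
  have hh_b: "\<bar>hh i j xt\<bar> \<le> 4" if "i < m" "j < m" "xt \<in> space Fs" for i j xt
    unfolding hh_def using hh_bdd[OF x] that by (simp add: m_def)
  have hh_int: "integrable Fs (hh i j)" if "i < m" "j < m" for i j
    using hh_m[OF that] hh_b[OF that] by (intro int_bounded[where B=4] Fs.prob_space_axioms) auto
  have yvs: "yv n x xt j \<in> space M" if "xt \<in> space Fs" "j < m" for xt j
    using yv_space[OF x that(1)] that(2) by (simp add: m_def)
  have S1: "emeasure (approx_posterior M F \<alpha> T n x) A \<le> emeasure N (f -` A \<inter> space N)"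
    unfolding ap by (rule emeasure_distr_le)
  define Y where "Y = {p \<in> space N. \<not> ((\<forall>j<m. fst p j \<ge> 0) \<and> (\<Sum>j<m. fst p j) = 1) \<or>
                        \<epsilon>^2 / 4 < (\<Sum>i<m. \<Sum>j<m. fst p i * fst p j * hh i j (snd p))}"
  have S2: "f -` A \<inter> space N \<subseteq> Y"
  proof
    fix p assume p: "p \<in> f -` A \<inter> space N"
    obtain w xt where pw: "p = (w, xt)" by (cases p)
    have xt: "xt \<in> space Fs" using p pw by (auto simp: N_def space_pair_measure)
    show "p \<in> Y"
    proof (cases "(\<forall>j<m. w j \<ge> 0) \<and> (\<Sum>j<m. w j) = 1")
      case False then show ?thesis using p pw by (auto simp: Y_def)
    next
      case True
      let ?P = "weighted_dirac M m (yv n x xt) w"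
      have wp: "prob_space ?P" "sets ?P = sets M"
        using wd_prob[of m w "yv n x xt" M] True yvs[OF xt] by auto
      then have Pin: "?P \<in> space (prob_algebra M)" by (simp add: space_prob_algebra)
      have "?P \<in> A" using p pw by (simp add: f_def)
      then have "\<epsilon> < mmd k P0 (Pth (thstar ?P))" by (simp add: A_def)
      also have "\<dots> \<le> 2 * mmd k P0 ?P" by (rule thstar_bound[OF Pin])
      finally have "\<epsilon> / 2 < mmd k P0 ?P" by simp
      then have "(\<epsilon> / 2)^2 < (mmd k P0 ?P)^2" using eps by (intro power_strict_mono) auto
      also have "(mmd k P0 ?P)^2 = (\<Sum>i<m. \<Sum>j<m. w i * w j * hh i j xt)"
        unfolding hh_def using True yvs[OF xt] by (intro mmd_wd[OF kernel k_meas k_bdd P0]) auto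
      finally show ?thesis using p pw by (auto simp: Y_def power_divide)
    qed
  qed
  have fstm: "(\<lambda>p. fst p j) \<in> borel_measurable N" if "j < m" for j
  proof -
    have "(\<lambda>w. w j) \<in> borel_measurable D"
      using measurable_component_singleton[of j "{..<m}" "\<lambda>_. borel"] that
      by (simp add: measurable_cong_sets[OF Dsets refl])
    then show ?thesis unfolding N_def by (rule measurable_compose[OF measurable_fst])
  qed
  have psim: "(\<lambda>p. \<Sum>i<m. \<Sum>j<m. fst p i * fst p j * hh i j (snd p)) \<in> borel_measurable N"
  proof (intro borel_measurable_sum borel_measurable_times)
    fix i j assume "i \<in> {..<m}" "j \<in> {..<m}"
    then show "(\<lambda>p. fst p i) \<in> borel_measurable N" "(\<lambda>p. fst p j) \<in> borel_measurable N"
      "(\<lambda>p. hh i j (snd p)) \<in> borel_measurable N"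
      using fstm hh_m by (auto simp: N_def intro: measurable_compose[OF measurable_snd])
  qed
  have S3: "Y \<in> sets N"
  proof -
    have "Y = (\<Union>j<m. {p \<in> space N. fst p j < 0}) \<union> (space N - {p \<in> space N. (\<Sum>j<m. fst p j) = 1})
          \<union> {p \<in> space N. \<epsilon>^2 / 4 < (\<Sum>i<m. \<Sum>j<m. fst p i * fst p j * hh i j (snd p))}"
      unfolding Y_def by (auto simp: not_le)
    also have "\<dots> \<in> sets N"
    proof (intro sets.Un sets.Diff sets.finite_UN)
      show "\<And>j. j \<in> {..<m} \<Longrightarrow> {p \<in> space N. fst p j < 0} \<in> sets N"
        using fstm by (auto intro: borel_measurable_less)
      show "{p \<in> space N. (\<Sum>j<m. fst p j) = 1} \<in> sets N"
        using fstm by (auto intro!: borel_measurable_eq borel_measurable_sum)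
      show "{p \<in> space N. \<epsilon>^2 / 4 < (\<Sum>i<m. \<Sum>j<m. fst p i * fst p j * hh i j (snd p))} \<in> sets N"
        using psim by (auto intro: borel_measurable_less)
    qed auto
    finally show ?thesis .
  qed
  have Y_N: "Y \<in> sets (D \<Otimes>\<^sub>M Fs)" using S3 by (simp add: N_def)
  have S4: "emeasure N Y = (\<integral>\<^sup>+g. emeasure Fs (Pair (simplex_normalize m g) -` Y) \<partial>G)"
  proof -
    have "emeasure N Y = (\<integral>\<^sup>+w. emeasure Fs (Pair w -` Y) \<partial>D)"
      unfolding N_def by (rule Fs.emeasure_pair_measure_alt[OF Y_N])
    also have "\<dots> = (\<integral>\<^sup>+g. emeasure Fs (Pair (simplex_normalize m g) -` Y) \<partial>G)"
    proof -
      have "(\<lambda>w. emeasure Fs (Pair w -` Y)) \<in> borel_measurable D"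
        by (rule Fs.measurable_emeasure_Pair[OF Y_N])
      from nn_integral_distr[OF snG this[unfolded D_eq]] show ?thesis unfolding D_eq by simp
    qed
    finally show ?thesis .
  qed
  have Qnn: "0 \<le> Qf g xt" if g: "\<And>j. j < m \<Longrightarrow> g j > 0" and xt: "xt \<in> space Fs" for g xt
  proof -
    define S where "S = (\<Sum>i<m. g i)"
    have S: "S > 0" unfolding S_def using g m by (intro sum_pos) auto
    have "0 \<le> (mmd k P0 (weighted_dirac M m (yv n x xt) (\<lambda>j. g j / S)))^2" by simp
    also have "\<dots> = (\<Sum>i<m. \<Sum>j<m. (g i / S) * (g j / S) * hh i j xt)"
      unfolding hh_def
    proof (rule mmd_wd[OF kernel k_meas k_bdd P0])
      show "\<And>j. j < m \<Longrightarrow> 0 \<le> g j / S" using g S by (simp add: less_imp_le)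
      show "(\<Sum>j<m. g j / S) = 1" using S by (simp add: S_def sum_divide_distrib[symmetric])
      show "\<And>j. j < m \<Longrightarrow> yv n x xt j \<in> space M" by (rule yvs[OF xt])
    qed
    also have "\<dots> = Qf g xt / S^2" unfolding Qf_def by (rule sum_sq_div)
    finally show ?thesis using S by (simp add: zero_le_divide_iff)
  qed
  have Qf_m: "Qf g \<in> borel_measurable Fs" for g
    unfolding Qf_def using hh_m by (auto intro!: borel_measurable_sum borel_measurable_times)
  have Qf_int: "integrable Fs (Qf g)" for g
    unfolding Qf_def using hh_int by (auto intro!: Bochner_Integration.integrable_sum integrable_mult_right)
  have Qf_integral: "(\<integral>xt. Qf g xt \<partial>Fs) = q g" for g
  proof -
    have "(\<integral>xt. Qf g xt \<partial>Fs) = (\<Sum>i<m. \<integral>xt. (\<Sum>j<m. g i * g j * hh i j xt) \<partial>Fs)"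
      unfolding Qf_def by (rule Bochner_Integration.integral_sum)
        (auto intro!: Bochner_Integration.integrable_sum integrable_mult_right hh_int)
    also have "\<dots> = (\<Sum>i<m. \<Sum>j<m. \<integral>xt. g i * g j * hh i j xt \<partial>Fs)"
      by (intro sum.cong refl Bochner_Integration.integral_sum) (auto intro!: integrable_mult_right hh_int)
    also have "\<dots> = q g" unfolding q_def H_def by simp
    finally show ?thesis .
  qed
  define Z' where "Z' = {g \<in> space G. (\<exists>j<m. g j \<le> 0) \<or> (\<Sum>i<n. g i) < real n / 2}"
  have Z'Z: "Z' = Z" unfolding Z'_def Z_def G_def m_def ..
  have S5: "emeasure Fs (Pair (simplex_normalize m g) -` Y) \<le> indicator Z' g + ennreal (q g / c)"
    if g: "g \<in> space G" for g
  proof -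
    let ?w = "simplex_normalize m g"
    have wD: "?w \<in> space D" using sn_ext[of m g] by (simp add: sets_eq_imp_space_eq[OF Dsets] space_PiM PiE_iff)
    have wsimp: "(\<forall>j<m. ?w j \<ge> 0) \<and> (\<Sum>j<m. ?w j) = 1" using sn_nonneg sn_sum[OF m] by auto
    have sl: "Pair ?w -` Y = {xt \<in> space Fs. \<epsilon>^2 / 4 < (\<Sum>i<m. \<Sum>j<m. ?w i * ?w j * hh i j xt)}"
      using wD wsimp by (auto simp: Y_def N_def space_pair_measure)
    show ?thesis
    proof (cases "g \<in> Z'")
      case True
      have "emeasure Fs (Pair ?w -` Y) \<le> 1" by (rule Fs.emeasure_le_1)
      then show ?thesis using True by (simp add: add_increasing2)
    next
      case False
      then have gpos: "\<And>j. j < m \<Longrightarrow> g j > 0" and gS: "(\<Sum>i<n. g i) \<ge> real n / 2"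
        using g by (auto simp: Z'_def not_le)
      define S where "S = (\<Sum>i<m. g i)"
      have "(\<Sum>i<n. g i) \<le> S" unfolding S_def m_def
        using gpos by (intro sum_mono2) (auto simp: m_def less_imp_le)
      then have Sn: "S \<ge> real n / 2" using gS by simp
      have Spos: "S > 0" using Sn n by simp
      have wS: "?w j = g j / S" if "j < m" for j unfolding S_def using sn_pos[OF gpos m that] .
      have sub: "Pair ?w -` Y \<subseteq> {xt \<in> space Fs. c < Qf g xt}"
      proof
        fix xt assume "xt \<in> Pair ?w -` Y"
        then have xt: "xt \<in> space Fs" and lt: "\<epsilon>^2 / 4 < (\<Sum>i<m. \<Sum>j<m. ?w i * ?w j * hh i j xt)"
          using sl by auto
        have "(\<Sum>i<m. \<Sum>j<m. ?w i * ?w j * hh i j xt) = (\<Sum>i<m. \<Sum>j<m. (g i / S) * (g j / S) * hh i j xt)"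
          by (intro sum.cong refl) (simp add: wS)
        also have "\<dots> = Qf g xt / S^2" unfolding Qf_def by (rule sum_sq_div)
        finally have "\<epsilon>^2 / 4 < Qf g xt / S^2" using lt by simp
        then have "S^2 * \<epsilon>^2 / 4 < Qf g xt" using Spos by (simp add: field_simps)
        moreover have "c \<le> S^2 * \<epsilon>^2 / 4"
        proof -
          have "(real n / 2)^2 \<le> S^2" using Sn n by (intro power_mono) auto
          then show ?thesis unfolding c_def by (intro divide_right_mono mult_right_mono) auto
        qed
        ultimately show "xt \<in> {xt \<in> space Fs. c < Qf g xt}" using xt by simp
      qed
      have Cm: "{xt \<in> space Fs. c < Qf g xt} \<in> sets Fs" using Qf_m by (auto intro: borel_measurable_less)
      have "emeasure Fs (Pair ?w -` Y) \<le> emeasure Fs {xt \<in> space Fs. c < Qf g xt}"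
        by (rule emeasure_mono[OF sub Cm])
      also have "\<dots> = (\<integral>\<^sup>+xt. indicator {xt \<in> space Fs. c < Qf g xt} xt \<partial>Fs)"
        using Cm by simp
      also have "\<dots> \<le> (\<integral>\<^sup>+xt. ennreal (Qf g xt / c) \<partial>Fs)"
      proof (rule nn_integral_mono)
        fix xt assume "xt \<in> space Fs"
        show "indicator {xt \<in> space Fs. c < Qf g xt} xt \<le> ennreal (Qf g xt / c)"
          using c by (auto simp: indicator_def)
      qed
      also have "\<dots> = ennreal (\<integral>xt. Qf g xt / c \<partial>Fs)"
        using Qnn[OF gpos] c Qf_int by (intro nn_integral_eq_integral AE_I2) auto
      also have "(\<integral>xt. Qf g xt / c \<partial>Fs) = q g / c" using Qf_integral by simp
      finally show ?thesis by (simp add: add_increasing)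
    qed
  qed
  have compG: "(\<lambda>g. g j) \<in> borel_measurable G" if "j < m" for j
    using measurable_component_singleton[of j "{..<m}" "\<lambda>_. borel"] that
    by (simp add: measurable_cong_sets[OF Gsets refl])
  have Z'm: "Z' \<in> sets G"
  proof -
    have "Z' = (\<Union>j<m. {g \<in> space G. g j \<le> 0}) \<union> {g \<in> space G. (\<Sum>i<n. g i) < real n / 2}"
      unfolding Z'_def by auto
    also have "\<dots> \<in> sets G"
    proof (intro sets.Un sets.finite_UN)
      show "\<And>j. j \<in> {..<m} \<Longrightarrow> {g \<in> space G. g j \<le> 0} \<in> sets G"
        using compG by (auto intro: borel_measurable_le)
      show "{g \<in> space G. (\<Sum>i<n. g i) < real n / 2} \<in> sets G"
        using compG by (auto intro!: borel_measurable_less borel_measurable_sum simp: m_def)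
    qed auto
    finally show ?thesis .
  qed
  have q_m: "q \<in> borel_measurable G"
    unfolding q_def using compG by (auto intro!: borel_measurable_sum borel_measurable_times)
  have gg_int: "integrable G (\<lambda>g. g i * g j)" if "i < m" "j < m" for i j
    unfolding G_def using Gm_int[OF alpha T] that by (simp add: m_def)
  have q_int: "integrable G q"
    unfolding q_def using gg_int by (auto intro!: Bochner_Integration.integrable_sum integrable_mult_left)
  have q_nn: "AE g in G. 0 \<le> q g"
  proof -
    have "AE g in G. \<forall>j<m. g j > 0" unfolding G_def m_def by (rule Gm_AE_pos[OF alpha T])
    then show ?thesis
    proof (rule AE_mp, intro AE_I2 impI)
      fix g :: "nat \<Rightarrow> real" assume "\<forall>j<m. g j > 0"
      then have "0 \<le> (\<integral>xt. Qf g xt \<partial>Fs)" using Qnn by (intro integral_nonneg_AE AE_I2) auto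
      then show "0 \<le> q g" using Qf_integral by simp
    qed
  qed
  have q_integral: "(\<integral>g. q g \<partial>G) = (\<Sum>i<m. \<Sum>j<m. (\<integral>g. g i * g j \<partial>G) * H i j)"
  proof -
    have "(\<integral>g. q g \<partial>G) = (\<Sum>i<m. \<integral>g. (\<Sum>j<m. g i * g j * H i j) \<partial>G)"
      unfolding q_def by (rule Bochner_Integration.integral_sum)
        (auto intro!: Bochner_Integration.integrable_sum integrable_mult_left gg_int)
    also have "\<dots> = (\<Sum>i<m. \<Sum>j<m. \<integral>g. g i * g j * H i j \<partial>G)"
      by (intro sum.cong refl Bochner_Integration.integral_sum) (auto intro!: integrable_mult_left gg_int)
    also have "\<dots> = (\<Sum>i<m. \<Sum>j<m. (\<integral>g. g i * g j \<partial>G) * H i j)" by simp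
    finally show ?thesis .
  qed
  have "emeasure (approx_posterior M F \<alpha> T n x) A \<le> emeasure N Y"
    using S1 emeasure_mono[OF S2 S3] by (rule order_trans)
  also have "\<dots> = (\<integral>\<^sup>+g. emeasure Fs (Pair (simplex_normalize m g) -` Y) \<partial>G)" by (rule S4)
  also have "\<dots> \<le> (\<integral>\<^sup>+g. indicator Z' g + ennreal (q g / c) \<partial>G)"
    by (rule nn_integral_mono) (rule S5)
  also have "\<dots> = emeasure G Z' + (\<integral>\<^sup>+g. ennreal (q g / c) \<partial>G)"
    using Z'm q_m by (subst nn_integral_add) auto
  also have "(\<integral>\<^sup>+g. ennreal (q g / c) \<partial>G) = ennreal (\<integral>g. q g / c \<partial>G)"
    using q_nn c q_int by (intro nn_integral_eq_integral) auto
  also have "(\<integral>g. q g / c \<partial>G) = (\<Sum>i<m. \<Sum>j<m. (\<integral>g. g i * g j \<partial>G) * H i j) / c"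
    using q_integral by simp
  finally have le: "emeasure (approx_posterior M F \<alpha> T n x) A \<le> emeasure G Z' + ennreal ((\<Sum>i<m. \<Sum>j<m. (\<integral>g. g i * g j \<partial>G) * H i j) / c)" .
  have nn: "0 \<le> (\<Sum>i<m. \<Sum>j<m. (\<integral>g. g i * g j \<partial>G) * H i j)"
    using q_integral integral_nonneg_AE[OF q_nn] by simp
  show ?thesis using le nn unfolding A_def Z'Z G_def m_def H_def hh_def by (rule conjI)
qed

end

lemma Gm_Z:
  assumes alpha: "\<alpha> > 0" and T: "T \<ge> 1" and n: "n \<ge> 1"
  shows "emeasure (Gm \<alpha> T n) {g \<in> space (Gm \<alpha> T n). (\<exists>j<n+T. g j \<le> 0) \<or> (\<Sum>i<n. g i) < real n / 2}
           \<le> ennreal (4 / real n)"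
proof -
  define G where "G = Gm \<alpha> T n"
  define m where "m = n + T"
  interpret G: prob_space G unfolding G_def by (rule Gm_prob[OF alpha T])
  have Gsets: "sets G = sets (PiM {..<m} (\<lambda>_. borel))" unfolding G_def m_def by (rule Gm_sets)
  have compG: "(\<lambda>g. g j) \<in> borel_measurable G" if "j < m" for j
    using measurable_component_singleton[of j "{..<m}" "\<lambda>_. borel"] that
    by (simp add: measurable_cong_sets[OF Gsets refl])
  define Sd where "Sd = (\<lambda>g::nat\<Rightarrow>real. \<Sum>i<n. g i)"
  have Sd_m: "Sd \<in> borel_measurable G" unfolding Sd_def using compG by (auto simp: m_def)
  define Z1 where "Z1 = {g \<in> space G. \<exists>j<m. g j \<le> 0}"
  define Z2 where "Z2 = {g \<in> space G. Sd g < real n / 2}"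
  have Z1m: "Z1 \<in> sets G"
  proof -
    have "Z1 = (\<Union>j<m. {g \<in> space G. g j \<le> 0})" unfolding Z1_def by auto
    also have "\<dots> \<in> sets G" using compG by (auto intro!: sets.finite_UN borel_measurable_le)
    finally show ?thesis .
  qed
  have Z2m: "Z2 \<in> sets G" unfolding Z2_def using Sd_m by (auto intro: borel_measurable_less)
  have Z1_0: "emeasure G Z1 = 0"
  proof -
    have "AE g in G. \<forall>j<m. g j > 0" unfolding G_def m_def by (rule Gm_AE_pos[OF alpha T])
    then show ?thesis by (subst (asm) AE_iff_measurable[OF Z1m]) (auto simp: Z1_def not_less)
  qed
  have mom: "(\<integral>g. g i * g j \<partial>G) = (if i = j then 2 else 1)" if "i < n" "j < n" for i j
    unfolding G_def using Gm_mom[OF alpha T, of i n j] that by (simp add: aa_def)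
  have mom1: "(\<integral>g. g i \<partial>G) = 1" if "i < n" for i
    unfolding G_def using Gm_mom1[OF alpha T, of i n] that by (simp add: aa_def)
  have gg_int: "integrable G (\<lambda>g. g i * g j)" if "i < n" "j < n" for i j
    unfolding G_def using Gm_int[OF alpha T, of i n j] that by simp
  have g_int: "integrable G (\<lambda>g. g i)" if "i < n" for i
    unfolding G_def using Gm_int1[OF alpha T, of i n] that by simp
  have sq: "(Sd g - real n)^2 = (\<Sum>i<n. \<Sum>j<n. g i * g j) - 2 * real n * Sd g + (real n)^2" for g
    unfolding Sd_def by (simp add: power2_eq_square sum_product algebra_simps)
  have I1: "(\<integral>g. (\<Sum>i<n. \<Sum>j<n. g i * g j) \<partial>G) = real n * (real n + 1)"
  proof -
    have "(\<integral>g. (\<Sum>i<n. \<Sum>j<n. g i * g j) \<partial>G) = (\<Sum>i<n. \<integral>g. (\<Sum>j<n. g i * g j) \<partial>G)"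
      by (rule Bochner_Integration.integral_sum) (auto intro!: Bochner_Integration.integrable_sum gg_int)
    also have "\<dots> = (\<Sum>i<n. \<Sum>j<n. \<integral>g. g i * g j \<partial>G)"
      by (intro sum.cong refl Bochner_Integration.integral_sum) (auto intro!: gg_int)
    also have "\<dots> = (\<Sum>i<n. \<Sum>j<n. (1 + (if i = j then 1 else 0)::real))"
      by (intro sum.cong refl) (simp add: mom)
    also have "\<dots> = (\<Sum>i<n. real n + 1)"
      by (intro sum.cong refl) (simp add: sum.distrib)
    also have "\<dots> = real n * (real n + 1)" by simp
    finally show ?thesis .
  qed
  have I2: "(\<integral>g. Sd g \<partial>G) = real n"
    unfolding Sd_def using g_int by (simp add: Bochner_Integration.integral_sum mom1)
  have Sd_int: "integrable G Sd" unfolding Sd_def using g_int by auto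
  have V_int: "integrable G (\<lambda>g. (Sd g - real n)^2)"
    unfolding sq using gg_int Sd_int
    by (intro Bochner_Integration.integrable_add Bochner_Integration.integrable_diff integrable_mult_right
         Bochner_Integration.integrable_sum) auto
  have V: "(\<integral>g. (Sd g - real n)^2 \<partial>G) = real n"
  proof -
    have "(\<integral>g. (Sd g - real n)^2 \<partial>G) = (\<integral>g. (\<Sum>i<n. \<Sum>j<n. g i * g j) \<partial>G) - 2 * real n * (\<integral>g. Sd g \<partial>G) + (real n)^2"
      unfolding sq using gg_int Sd_int
      by (subst Bochner_Integration.integral_add Bochner_Integration.integral_diff;
          (auto intro!: Bochner_Integration.integrable_add Bochner_Integration.integrable_diff
            integrable_mult_right Bochner_Integration.integrable_sum simp: G.prob_space)?)+
    also have "\<dots> = real n" unfolding I1 I2 by (simp add: power2_eq_square algebra_simps)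
    finally show ?thesis .
  qed
  have npos: "real n > 0" using n by simp
  have "emeasure G Z2 = (\<integral>\<^sup>+g. indicator Z2 g \<partial>G)" using Z2m by simp
  also have "\<dots> \<le> (\<integral>\<^sup>+g. ennreal ((Sd g - real n)^2 * (4 / (real n)^2)) \<partial>G)"
  proof (rule nn_integral_mono)
    fix g assume "g \<in> space G"
    show "indicator Z2 g \<le> ennreal ((Sd g - real n)^2 * (4 / (real n)^2))"
    proof (cases "g \<in> Z2")
      case True
      then have "Sd g < real n / 2" by (simp add: Z2_def)
      then have "real n / 2 \<le> real n - Sd g" by simp
      then have "(real n / 2)^2 \<le> (real n - Sd g)^2" using npos by (intro power_mono) auto
      then have "(real n)^2 / 4 \<le> (Sd g - real n)^2" by (simp add: power2_commute power_divide)
      then have "1 \<le> (Sd g - real n)^2 * (4 / (real n)^2)" using npos by (simp add: field_simps)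
      then show ?thesis using True by simp
    qed simp
  qed
  also have "\<dots> = ennreal (\<integral>g. (Sd g - real n)^2 * (4 / (real n)^2) \<partial>G)"
    using V_int by (intro nn_integral_eq_integral) auto
  also have "(\<integral>g. (Sd g - real n)^2 * (4 / (real n)^2) \<partial>G) = 4 / real n"
    using V npos by (simp add: power2_eq_square)
  finally have Z2b: "emeasure G Z2 \<le> ennreal (4 / real n)" .
  have "{g \<in> space G. (\<exists>j<m. g j \<le> 0) \<or> (\<Sum>i<n. g i) < real n / 2} = Z1 \<union> Z2"
    unfolding Z1_def Z2_def Sd_def by auto
  then have "emeasure G {g \<in> space G. (\<exists>j<m. g j \<le> 0) \<or> (\<Sum>i<n. g i) < real n / 2} \<le> emeasure G Z1 + emeasure G Z2"
    using emeasure_subadditive[OF Z1m Z2m] by simp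
  also have "\<dots> \<le> ennreal (4 / real n)" using Z1_0 Z2b by simp
  finally show ?thesis unfolding G_def m_def .
qed

context mmdset
begin

lemma hfun_inner_zero:
  assumes a: "a \<in> space M"
  shows "(\<integral>b. hfun k P0 a b \<partial>P0) = 0"
proof -
  interpret P: prob_space P0 by (rule P0(1))
  have spP0: "space P0 = space M" by (rule spP0[OF kernel k_meas k_bdd P0])
  let ?g = "\<lambda>y. LINT z|P0. k z y"
  have g_m: "?g \<in> borel_measurable P0"
    using g1_meas[OF kernel k_meas k_bdd P0] by (simp add: measurable_cong_sets[OF P0(2) refl])
  have g_int: "integrable P0 ?g"
    using g_m g1_bdd[OF kernel k_meas k_bdd P0] spP0 by (intro int_bounded[where B=1] P0(1)) auto
  have ka_m: "(\<lambda>b. k a b) \<in> borel_measurable P0" by (rule k_meas2[OF kernel k_meas k_bdd P0(2) a])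
  have ka_int: "integrable P0 (\<lambda>b. k a b)"
    using ka_m k_bdd a spP0 by (intro int_bounded[where B=1] P0(1)) auto
  have e1: "(\<integral>b. k a b \<partial>P0) = ?g a"
    by (rule Bochner_Integration.integral_cong[OF refl]) (use kernel a spP0 in \<open>auto simp: pd_kernel_def\<close>)
  have e2: "(\<integral>b. ?g b \<partial>P0) = Kint k P0 P0"
    unfolding Kint_def
  proof (rule Bochner_Integration.integral_cong[OF refl])
    fix b assume b: "b \<in> space P0"
    show "(LINT z|P0. k z b) = (LINT y|P0. k b y)"
      by (rule Bochner_Integration.integral_cong[OF refl]) (use kernel b spP0 in \<open>auto simp: pd_kernel_def\<close>)
  qed
  have "(\<integral>b. hfun k P0 a b \<partial>P0) = (\<integral>b. k a b \<partial>P0) - ?g a - (\<integral>b. ?g b \<partial>P0) + Kint k P0 P0"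
    unfolding hfun_def using ka_int g_int
    by (simp add: Bochner_Integration.integral_add Bochner_Integration.integral_diff P.prob_space)
  then show ?thesis using e1 e2 by simp
qed

end

context mmdset2
begin

lemma yv_joint:
  assumes "j < n + T"
  shows "(\<lambda>p. yv n (fst p) (snd p) j) \<in> measurable (PiM {..<n} (\<lambda>_. P0) \<Otimes>\<^sub>M Fs) M"
proof (cases "j < n")
  case True
  have "(\<lambda>x. x j) \<in> measurable (PiM {..<n} (\<lambda>_. P0)) M"
    using measurable_component_singleton[of j "{..<n}" "\<lambda>_. P0"] True
    by (simp add: measurable_cong_sets[OF refl P0(2)])
  then show ?thesis using True by (simp add: yv_def measurable_compose[OF measurable_fst])
next
  case False
  then have "j - n \<in> {..<T}" using assms by auto
  have "(\<lambda>x. x (j - n)) \<in> measurable Fs M"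
    using measurable_component_singleton[OF \<open>j - n \<in> {..<T}\<close>, of "\<lambda>_. F"]
    by (simp add: measurable_cong_sets[OF refl F(2)])
  then show ?thesis using False by (simp add: yv_def measurable_compose[OF measurable_snd])
qed

lemma H_meas:
  assumes "i < n + T" "j < n + T"
  shows "(\<lambda>x. \<integral>xt. hfun k P0 (yv n x xt i) (yv n x xt j) \<partial>Fs) \<in> borel_measurable (PiM {..<n} (\<lambda>_. P0))"
proof -
  interpret Fs: prob_space Fs by (rule Fs_prob)
  have "(\<lambda>p. hfun k P0 (yv n (fst p) (snd p) i) (yv n (fst p) (snd p) j)) \<in> borel_measurable (PiM {..<n} (\<lambda>_. P0) \<Otimes>\<^sub>M Fs)"
    using measurable_compose[OF measurable_Pair[OF yv_joint[OF assms(1)] yv_joint[OF assms(2)]]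
      hfun_meas[OF kernel k_meas k_bdd P0]] by simp
  then have "(\<lambda>(x, xt). hfun k P0 (yv n x xt i) (yv n x xt j)) \<in> borel_measurable (PiM {..<n} (\<lambda>_. P0) \<Otimes>\<^sub>M Fs)"
    by (simp add: case_prod_beta)
  then show ?thesis by (rule Fs.borel_measurable_lebesgue_integral)
qed

lemma H_bdd:
  assumes "i < n + T" "j < n + T" "x \<in> space (PiM {..<n} (\<lambda>_. P0))"
  shows "\<bar>\<integral>xt. hfun k P0 (yv n x xt i) (yv n x xt j) \<partial>Fs\<bar> \<le> 4"
proof -
  have x: "\<And>j. j < n \<Longrightarrow> x j \<in> space M"
    using assms(3) spP0[OF kernel k_meas k_bdd P0] by (auto simp: space_PiM PiE_iff)
  show ?thesis
    using hh_meas[OF x assms(1,2)] hh_bdd[OF x assms(1,2)]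
    by (intro abs_int_bound Fs_prob) auto
qed

lemma H_zero:
  assumes "i < n" "j < n" "i \<noteq> j"
  shows "(\<integral>x. (\<integral>xt. hfun k P0 (yv n x xt i) (yv n x xt j) \<partial>Fs) \<partial>PiM {..<n} (\<lambda>_. P0)) = 0"
proof -
  interpret Fs: prob_space Fs by (rule Fs_prob)
  have pps: "product_prob_space (\<lambda>_::nat. P0)"
    unfolding product_prob_space_def product_prob_space_axioms_def product_sigma_finite_def
    using P0 by (auto intro: prob_space_imp_sigma_finite)
  have spP: "space P0 = space M" by (rule spP0[OF kernel k_meas k_bdd P0])
  have "(\<integral>x. (\<integral>xt. hfun k P0 (yv n x xt i) (yv n x xt j) \<partial>Fs) \<partial>PiM {..<n} (\<lambda>_. P0))
      = (\<integral>x. hfun k P0 (x i) (x j) \<partial>PiM {..<n} (\<lambda>_. P0))"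
    using assms by (intro Bochner_Integration.integral_cong refl) (simp add: yv_def Fs.prob_space)
  also have "\<dots> = (\<integral>a. \<integral>b. hfun k P0 a b \<partial>P0 \<partial>P0)"
  proof (rule PiM_two[OF pps])
    show "(\<lambda>(x, y). hfun k P0 x y) \<in> borel_measurable (P0 \<Otimes>\<^sub>M P0)"
      using hfun_meas[OF kernel k_meas k_bdd P0]
      by (simp add: measurable_def sets_pair_measure_cong[OF P0(2) P0(2)] space_pair_measure spP)
    show "\<And>x y. x \<in> space P0 \<Longrightarrow> y \<in> space P0 \<Longrightarrow> \<bar>hfun k P0 x y\<bar> \<le> 4"
      using hfun_bdd[OF kernel k_meas k_bdd P0] spP by auto
  qed (use assms in auto)
  also have "\<dots> = (\<integral>a. 0 \<partial>P0)"
    by (rule Bochner_Integration.integral_cong[OF refl]) (use hfun_inner_zero spP in auto)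
  also have "\<dots> = 0" by simp
  finally show ?thesis .
qed

end

lemma cnt_ge: "(\<Sum>i<n+T. if n \<le> i then 1 else 0::real) = real T"
proof -
  have eq: "{..<n+T} = {..<n} \<union> {n..<n+T}" by auto
  have "(\<Sum>i<n+T. if n \<le> i then 1 else 0::real) = (\<Sum>i<n. if n \<le> i then 1 else 0::real) + (\<Sum>i\<in>{n..<n+T}. if n \<le> i then 1 else 0::real)"
    by (subst eq, rule sum.union_disjoint) auto
  also have "(\<Sum>i<n. if n \<le> i then 1 else 0::real) = 0" by (intro sum.neutral) auto
  also have "(\<Sum>i\<in>{n..<n+T}. if n \<le> i then 1 else 0::real) = (\<Sum>i\<in>{n..<n+T}. 1)" by (intro sum.cong) auto
  finally show ?thesis by simp
qed

lemma cnt_pairs: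
  "(\<Sum>i<n+T. \<Sum>j<n+T. if i < n \<and> j < n \<and> i \<noteq> j then 0 else 1::real) \<le> real (n+T) * (1 + 2 * real T)"
proof -
  have c: "(\<Sum>i<T+n. if n \<le> i then 1 else 0::real) = real T" using cnt_ge[of n T] by (simp add: add.commute)
  have "(\<Sum>i<n+T. \<Sum>j<n+T. if i < n \<and> j < n \<and> i \<noteq> j then 0 else 1::real)
      \<le> (\<Sum>i<n+T. \<Sum>j<n+T. (if i = j then 1 else 0) + (if n \<le> i then 1 else 0) + (if n \<le> j then 1 else 0::real))"
    by (intro sum_mono) auto
  also have "\<dots> = (\<Sum>i<n+T. 1 + real (n+T) * (if n \<le> i then 1 else 0) + real T)"
    by (intro sum.cong refl) (simp add: sum.distrib cnt_ge)
  also have "\<dots> = real (n+T) * (1 + 2 * real T)"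
    by (simp add: sum.distrib cnt_ge c sum_distrib_left[symmetric] algebra_simps)
  finally show ?thesis .
qed

lemma Mom_bnd:
  assumes "\<alpha> > 0" "T \<ge> 1" "i < n + T" "j < n + T"
  shows "0 \<le> (\<integral>g. g i * g j \<partial>Gm \<alpha> T n) \<and> (\<integral>g. g i * g j \<partial>Gm \<alpha> T n) \<le> (2 + \<alpha> / real T)^2"
proof -
  have a: "0 < aa \<alpha> T n l \<and> aa \<alpha> T n l \<le> 1 + \<alpha> / real T" for l
    using assms by (auto simp: aa_def)
  have "0 \<le> aa \<alpha> T n i * (aa \<alpha> T n i + 1) \<and> aa \<alpha> T n i * (aa \<alpha> T n i + 1) \<le> (2 + \<alpha> / real T)^2"
  proof
    show "0 \<le> aa \<alpha> T n i * (aa \<alpha> T n i + 1)" using a[of i] by simp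
    have "aa \<alpha> T n i * (aa \<alpha> T n i + 1) \<le> (2 + \<alpha> / real T) * (2 + \<alpha> / real T)"
      using a[of i] by (intro mult_mono) auto
    then show "aa \<alpha> T n i * (aa \<alpha> T n i + 1) \<le> (2 + \<alpha> / real T)^2" by (simp add: power2_eq_square)
  qed
  moreover have "0 \<le> aa \<alpha> T n i * aa \<alpha> T n j \<and> aa \<alpha> T n i * aa \<alpha> T n j \<le> (2 + \<alpha> / real T)^2"
  proof
    show "0 \<le> aa \<alpha> T n i * aa \<alpha> T n j" using a[of i] a[of j] by simp
    have "aa \<alpha> T n i * aa \<alpha> T n j \<le> (2 + \<alpha> / real T) * (2 + \<alpha> / real T)"
      using a[of i] a[of j] by (intro mult_mono) auto
    then show "aa \<alpha> T n i * aa \<alpha> T n j \<le> (2 + \<alpha> / real T)^2" by (simp add: power2_eq_square)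
  qed
  ultimately show ?thesis using Gm_mom[OF assms] by (cases "i = j") auto
qed

context mmdset2
begin

lemma V_int_bound:
  assumes n: "n \<ge> 1"
  defines "V \<equiv> (\<lambda>x. \<Sum>i<n+T. \<Sum>j<n+T. (\<integral>g. g i * g j \<partial>Gm \<alpha> T n) *
             (\<integral>xt. hfun k P0 (yv n x xt i) (yv n x xt j) \<partial>Fs))"
  shows "V \<in> borel_measurable (PiM {..<n} (\<lambda>_. P0))"
    "integrable (PiM {..<n} (\<lambda>_. P0)) V"
    "(\<integral>x. V x \<partial>PiM {..<n} (\<lambda>_. P0)) \<le> 4 * (2 + \<alpha> / real T)^2 * (real (n+T) * (1 + 2 * real T))"
proof -
  let ?\<Omega> = "PiM {..<n} (\<lambda>_. P0)"
  let ?H = "\<lambda>i j x. \<integral>xt. hfun k P0 (yv n x xt i) (yv n x xt j) \<partial>Fs"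
  let ?K = "(2 + \<alpha> / real T)^2"
  interpret \<Omega>: prob_space ?\<Omega> by (rule prob_space_PiM) (use P0 in auto)
  have Hint: "integrable ?\<Omega> (?H i j)" if "i < n+T" "j < n+T" for i j
    using H_meas[OF that] H_bdd[OF that] by (intro int_bounded[where B=4] \<Omega>.prob_space_axioms) auto
  show "V \<in> borel_measurable ?\<Omega>" unfolding V_def using H_meas by auto
  show "integrable ?\<Omega> V" unfolding V_def using Hint
    by (auto intro!: Bochner_Integration.integrable_sum integrable_mult_right)
  have "(\<integral>x. V x \<partial>?\<Omega>) = (\<Sum>i<n+T. \<integral>x. (\<Sum>j<n+T. (\<integral>g. g i * g j \<partial>Gm \<alpha> T n) * ?H i j x) \<partial>?\<Omega>)"
    unfolding V_def by (rule Bochner_Integration.integral_sum)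
      (auto intro!: Bochner_Integration.integrable_sum integrable_mult_right Hint)
  also have "\<dots> = (\<Sum>i<n+T. \<Sum>j<n+T. \<integral>x. (\<integral>g. g i * g j \<partial>Gm \<alpha> T n) * ?H i j x \<partial>?\<Omega>)"
    by (intro sum.cong refl Bochner_Integration.integral_sum) (auto intro!: integrable_mult_right Hint)
  also have "\<dots> = (\<Sum>i<n+T. \<Sum>j<n+T. (\<integral>g. g i * g j \<partial>Gm \<alpha> T n) * (\<integral>x. ?H i j x \<partial>?\<Omega>))" by simp
  also have "\<dots> \<le> (\<Sum>i<n+T. \<Sum>j<n+T. 4 * ?K * (if i < n \<and> j < n \<and> i \<noteq> j then 0 else 1))"
  proof (intro sum_mono)
    fix i j assume ij: "i \<in> {..<n+T}" "j \<in> {..<n+T}"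
    have mb: "0 \<le> (\<integral>g. g i * g j \<partial>Gm \<alpha> T n)" "(\<integral>g. g i * g j \<partial>Gm \<alpha> T n) \<le> ?K"
      using Mom_bnd[OF alpha T, of i n j] ij by auto
    show "(\<integral>g. g i * g j \<partial>Gm \<alpha> T n) * (\<integral>x. ?H i j x \<partial>?\<Omega>) \<le> 4 * ?K * (if i < n \<and> j < n \<and> i \<noteq> j then 0 else 1)"
    proof (cases "i < n \<and> j < n \<and> i \<noteq> j")
      case True
      then show ?thesis using H_zero[where i=i and j=j and n=n] by simp
    next
      case False
      have "\<bar>\<integral>x. ?H i j x \<partial>?\<Omega>\<bar> \<le> 4"
        using ij H_meas[where i=i and j=j and n=n] H_bdd[where i=i and j=j and n=n] by (intro abs_int_bound[OF \<Omega>.prob_space_axioms]) auto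
      then have "(\<integral>g. g i * g j \<partial>Gm \<alpha> T n) * (\<integral>x. ?H i j x \<partial>?\<Omega>) \<le> (\<integral>g. g i * g j \<partial>Gm \<alpha> T n) * 4"
        using mb(1) by (intro mult_left_mono) (auto simp: abs_le_iff)
      also have "\<dots> \<le> ?K * 4" using mb(2) by simp
      finally have "(\<integral>g. g i * g j \<partial>Gm \<alpha> T n) * (\<integral>x. ?H i j x \<partial>?\<Omega>) \<le> ?K * 4" .
      then show ?thesis by (subst if_not_P[OF False]) simp
    qed
  qed
  also have "\<dots> = 4 * ?K * (\<Sum>i<n+T. \<Sum>j<n+T. if i < n \<and> j < n \<and> i \<noteq> j then 0 else 1::real)"
    by (simp add: sum_distrib_left)
  also have "\<dots> \<le> 4 * ?K * (real (n+T) * (1 + 2 * real T))"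
    by (intro mult_left_mono cnt_pairs) auto
  finally show "(\<integral>x. V x \<partial>?\<Omega>) \<le> 4 * ?K * (real (n+T) * (1 + 2 * real T))" .
qed

end

lemma ennreal_measure_le: "ennreal (measure N A) \<le> emeasure N A"
  by (simp add: measure_def ennreal_enn2real_if)

context mmdset2
begin

lemma int_bound:
  assumes n: "n \<ge> 1" and eps: "\<epsilon> > 0"
  shows "(\<integral>x. measure (approx_posterior M F \<alpha> T n x) {Q \<in> space (prob_algebra M). mmd k P0 (Pth (thstar Q)) > \<epsilon>}
            \<partial>PiM {..<n} (\<lambda>_. P0))
         \<le> 4 / real n + 4 * (2 + \<alpha> / real T)^2 * (real (n+T) * (1 + 2 * real T)) / ((real n / 2)^2 * \<epsilon>^2 / 4)"
proof -
  let ?\<Omega> = "PiM {..<n} (\<lambda>_. P0)"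
  let ?A = "{Q \<in> space (prob_algebra M). mmd k P0 (Pth (thstar Q)) > \<epsilon>}"
  define c where "c = (real n / 2)^2 * \<epsilon>^2 / 4"
  define B where "B = 4 * (2 + \<alpha> / real T)^2 * (real (n+T) * (1 + 2 * real T))"
  define V where "V = (\<lambda>x. \<Sum>i<n+T. \<Sum>j<n+T. (\<integral>g. g i * g j \<partial>Gm \<alpha> T n) *
             (\<integral>xt. hfun k P0 (yv n x xt i) (yv n x xt j) \<partial>Fs))"
  define Z where "Z = {g \<in> space (Gm \<alpha> T n). (\<exists>j<n+T. g j \<le> 0) \<or> (\<Sum>i<n. g i) < real n / 2}"
  interpret \<Omega>: prob_space ?\<Omega> by (rule prob_space_PiM) (use P0 in auto)
  have c: "c > 0" using n eps by (simp add: c_def)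
  have B: "B \<ge> 0" by (simp add: B_def)
  note Vb = V_int_bound[OF n, folded V_def]
  have GZ: "emeasure (Gm \<alpha> T n) Z \<le> ennreal (4 / real n)" unfolding Z_def by (rule Gm_Z[OF alpha T n])
  have per: "emeasure (approx_posterior M F \<alpha> T n x) ?A \<le> emeasure (Gm \<alpha> T n) Z + ennreal (V x / c) \<and> 0 \<le> V x"
    if x: "x \<in> space ?\<Omega>" for x
  proof -
    have "\<And>j. j < n \<Longrightarrow> x j \<in> space M"
      using x spP0[OF kernel k_meas k_bdd P0] by (auto simp: space_PiM PiE_iff)
    from per_x[OF n this eps] show ?thesis unfolding V_def Z_def c_def .
  qed
  have "(\<integral>x. measure (approx_posterior M F \<alpha> T n x) ?A \<partial>?\<Omega>)
        \<le> enn2real (\<integral>\<^sup>+x. ennreal (measure (approx_posterior M F \<alpha> T n x) ?A) \<partial>?\<Omega>)"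
    by (rule integral_le_enn2real_nn) simp
  also have "\<dots> \<le> 4 / real n + B / c"
  proof (rule enn2real_leI)
    show "0 \<le> 4 / real n + B / c" using B c by simp
    have "(\<integral>\<^sup>+x. ennreal (measure (approx_posterior M F \<alpha> T n x) ?A) \<partial>?\<Omega>)
          \<le> (\<integral>\<^sup>+x. ennreal (4 / real n) + ennreal (V x / c) \<partial>?\<Omega>)"
    proof (rule nn_integral_mono)
      fix x assume x: "x \<in> space ?\<Omega>"
      have "ennreal (measure (approx_posterior M F \<alpha> T n x) ?A) \<le> emeasure (approx_posterior M F \<alpha> T n x) ?A"
        by (rule ennreal_measure_le)
      also have "\<dots> \<le> emeasure (Gm \<alpha> T n) Z + ennreal (V x / c)" using per[OF x] by blast
      also have "\<dots> \<le> ennreal (4 / real n) + ennreal (V x / c)" using GZ by (rule add_right_mono)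
      finally show "ennreal (measure (approx_posterior M F \<alpha> T n x) ?A) \<le> ennreal (4 / real n) + ennreal (V x / c)" .
    qed
    also have "\<dots> = ennreal (4 / real n) + (\<integral>\<^sup>+x. ennreal (V x / c) \<partial>?\<Omega>)"
      using Vb(1) by (subst nn_integral_add) (auto simp: \<Omega>.emeasure_space_1)
    also have "(\<integral>\<^sup>+x. ennreal (V x / c) \<partial>?\<Omega>) = ennreal (\<integral>x. V x / c \<partial>?\<Omega>)"
      using Vb(2) per c by (intro nn_integral_eq_integral AE_I2) auto
    also have "(\<integral>x. V x / c \<partial>?\<Omega>) = (\<integral>x. V x \<partial>?\<Omega>) / c" by simp
    also have "\<dots> \<le> B / c" using Vb(3) c unfolding B_def by (intro divide_right_mono) auto
    finally show "(\<integral>\<^sup>+x. ennreal (measure (approx_posterior M F \<alpha> T n x) ?A) \<partial>?\<Omega>) \<le> ennreal (4 / real n + B / c)"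
      using B c by (simp add: ennreal_plus[symmetric] del: ennreal_plus) (metis ennreal_leI order_trans ennreal_plus divide_nonneg_pos less_eq_real_def of_nat_0_le_iff zero_le_divide_iff zero_le_numeral)
  qed
  finally show ?thesis unfolding B_def c_def .
qed

end

theorem corollary4:
  fixes M :: "'a measure"
    and k :: "'a \<Rightarrow> 'a \<Rightarrow> real"
    and Theta :: "'b set"
    and Pth :: "'b \<Rightarrow> 'a measure"
    and P0 F :: "'a measure"
    and thstar :: "'a measure \<Rightarrow> 'b"
    and \<alpha> :: real
    and T :: nat
    and Mn :: "nat \<Rightarrow> real"
  assumes kernel: "pd_kernel M k"
    and k_meas: "(\<lambda>(x, y). k x y) \<in> borel_measurable (M \<Otimes>\<^sub>M M)"
    and k_bdd: "\<forall>x\<in>space M. \<forall>y\<in>space M. \<bar>k x y\<bar> \<le> 1"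
    and model: "\<forall>\<theta>\<in>Theta. prob_space (Pth \<theta>) \<and> sets (Pth \<theta>) = sets M"
    and P0: "prob_space P0" "sets P0 = sets M"
    and well_spec: "(INF \<theta>\<in>Theta. mmd k (Pth \<theta>) P0) = 0"
    and thstar_min: "\<forall>Q\<in>space (prob_algebra M). thstar Q \<in> Theta \<and>
                        (\<forall>\<theta>\<in>Theta. (mmd k Q (Pth (thstar Q)))\<^sup>2 \<le> (mmd k Q (Pth \<theta>))\<^sup>2)"
    and thstar_meas: "(\<lambda>Q. mmd k P0 (Pth (thstar Q))) \<in> borel_measurable (prob_algebra M)"
    and alpha: "\<alpha> > 0"
    and T: "T \<ge> 1"
    and F: "prob_space F" "sets F = sets M"
    and Mn_pos: "\<forall>n. Mn n > 0"
    and Mn_inf: "filterlim Mn at_top sequentially"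
    and Mn_rate: "(\<lambda>n. Mn n / sqrt (real n)) \<longlonglongrightarrow> 0"
  shows "(\<lambda>n. \<integral>x. measure (approx_posterior M F \<alpha> T n x)
                 {Q \<in> space (prob_algebra M). mmd k P0 (Pth (thstar Q)) > Mn n / sqrt (real n)}
               \<partial>(PiM {..<n} (\<lambda>_. P0))) \<longlonglongrightarrow> 0"
proof -
  interpret mmdset2 M k Theta Pth P0 thstar F \<alpha> T
    by (rule mmdset2.intro[OF mmdset.intro mmdset2_axioms.intro]) (rule assms)+
  define K where "K = (2 + \<alpha> / real T)^2"
  define C where "C = 64 * K * (1 + real T) * (1 + 2 * real T)"
  define I where "I = (\<lambda>n. \<integral>x. measure (approx_posterior M F \<alpha> T n x)
                 {Q \<in> space (prob_algebra M). mmd k P0 (Pth (thstar Q)) > Mn n / sqrt (real n)}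
               \<partial>(PiM {..<n} (\<lambda>_. P0)))"
  have K: "K \<ge> 0" by (simp add: K_def)
  have upper: "I n \<le> 4 / real n + C * (inverse (Mn n))^2" if n: "n \<ge> 1" for n
  proof -
    define \<epsilon> where "\<epsilon> = Mn n / sqrt (real n)"
    have npos: "real n > 0" using n by simp
    have Mpos: "Mn n > 0" using Mn_pos by simp
    have eps: "\<epsilon> > 0" unfolding \<epsilon>_def using npos Mpos by simp
    have "I n \<le> 4 / real n + 4 * K * (real (n+T) * (1 + 2 * real T)) / ((real n / 2)^2 * \<epsilon>^2 / 4)"
      unfolding I_def K_def \<epsilon>_def using int_bound[OF n eps[unfolded \<epsilon>_def]] by simp
    also have "(real n / 2)^2 * \<epsilon>^2 / 4 = real n * (Mn n)^2 / 16"
      unfolding \<epsilon>_def using npos by (simp add: power_divide power2_eq_square field_simps)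
    also have "4 * K * (real (n+T) * (1 + 2 * real T)) / (real n * (Mn n)^2 / 16)
              = 64 * K * (real (n+T) / real n) * (1 + 2 * real T) * (inverse (Mn n))^2"
    proof -
      have "Mn n \<noteq> 0" "real n \<noteq> 0" using npos Mpos by auto
      then show ?thesis by (simp add: power2_eq_square inverse_eq_divide)
    qed
    also have "\<dots> \<le> 64 * K * (1 + real T) * (1 + 2 * real T) * (inverse (Mn n))^2"
    proof -
      have "real T * 1 \<le> real T * real n" using n by (intro mult_left_mono) auto
      then have "real (n+T) \<le> (1 + real T) * real n" by (simp add: algebra_simps)
      then have "real (n+T) / real n \<le> 1 + real T" using npos by (simp add: pos_divide_le_eq)
      then show ?thesis using K by (intro mult_right_mono mult_left_mono) auto
    qed
    finally show ?thesis unfolding C_def by simp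
  qed
  have lower: "0 \<le> I n" for n unfolding I_def by (intro integral_nonneg_AE AE_I2) simp
  have lim: "(\<lambda>n. 4 / real n + C * (inverse (Mn n))^2) \<longlonglongrightarrow> 0"
  proof -
    have "(\<lambda>n. 4 * (1 / real n)) \<longlonglongrightarrow> 4 * 0" by (intro tendsto_mult tendsto_const lim_inverse_n')
    moreover have "(\<lambda>n. C * (inverse (Mn n))^2) \<longlonglongrightarrow> C * 0^2"
      by (intro tendsto_mult tendsto_const tendsto_power tendsto_inverse_0_at_top Mn_inf)
    ultimately have "(\<lambda>n. 4 * (1 / real n) + C * (inverse (Mn n))^2) \<longlonglongrightarrow> 4 * 0 + C * 0^2"
      by (rule tendsto_add)
    then show ?thesis by simp
  qed
  have "I \<longlonglongrightarrow> 0"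
  proof (rule tendsto_sandwich[OF _ _ tendsto_const lim])
    show "\<forall>\<^sub>F n in sequentially. 0 \<le> I n" using lower by simp
    show "\<forall>\<^sub>F n in sequentially. I n \<le> 4 / real n + C * (inverse (Mn n))^2"
      using upper by (intro eventually_sequentiallyI[of 1]) auto
  qed
  then show ?thesis unfolding I_def .
qed

end
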